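(* Let $Y$ be the limiting Quicksort random variable and $\phi(t)=\mathbf{E}e^{itY}$ its characteristic function. For every real $p\ge 0$ the quantity $c_p:=\sup_{t\in\mathbb{R}}|t|^p|\phi(t)|$ satisfies $0<c_p<\infty$; thus $c_p$ is the smallest constant such that $|\phi(t)|\le c_p|t|^{-p}$ for all $t\in\mathbb{R}$. Moreover, $c_0=1$, $c_{1/2}\le 2$, $c_{3/4}\le\sqrt{8\pi}$, $c_1\le 4\pi$, $c_{3/2}<187$, $c_{5/2}<103215$, $c_{7/2}<197102280$, and $$c_{p_1}^{1/p_1}\le c_{p_2}^{1/p_2}\quad (0<p_1\le p_2),\qquad c_{p+1}\le 2^{p+1}c_p^{1+1/p}\,\frac{p}{p-1}\quad (p>1),\qquad c_p\le 2^{p^2+6p}\quad (p>0).$$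
   Context: Let $g(u):=2u\ln u+2(1-u)\ln(1-u)+1$ for $u\in(0,1)$. The limiting Quicksort random variable $Y$ is the limit in distribution of $(X_n-\mathbf{E}X_n)/n$, where $X_n$ is the number of comparisons used by randomized Quicksort on $n$ distinct numbers; equivalently, its law is the unique law with $\mathbf{E}Y=0$ and finite variance satisfying $Y\overset{d}{=}UY+(1-U)Z+g(U)$, where on the right $U,Y,Z$ are independent, $Z\overset{d}{=}Y$ and $U$ is uniform on $(0,1)$. $Y$ has finite moment generating function everywhere. *)

theory Defs
  imports "HOL-Probability.Probability"
begin

definition qs_g :: "real \<Rightarrow> real" where
  "qs_g u = 2 * u * ln u + 2 * (1 - u) * ln (1 - u) + 1"

definition quicksort_limit_law :: "real measure \<Rightarrow> bool" where
  "quicksort_limit_law M \<longleftrightarrow>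
     real_distribution M \<and>
     integrable M (\<lambda>x. x) \<and> (\<integral>x. x \<partial>M) = 0 \<and>
     integrable M (\<lambda>x. x ^ 2) \<and>
     M = distr (uniform_measure lborel {0<..<1} \<Otimes>\<^sub>M (M \<Otimes>\<^sub>M M)) borel
           (\<lambda>(u, y, z). u * y + (1 - u) * z + qs_g u)"

text \<open>|t|^p with the convention |t|^0 = 1 (also at t = 0).\<close>
definition abs_pow :: "real \<Rightarrow> real \<Rightarrow> real" where
  "abs_pow t p = (if p = 0 then 1 else \<bar>t\<bar> powr p)"

definition qs_c :: "real measure \<Rightarrow> real \<Rightarrow> real" where
  "qs_c M p = (SUP t. abs_pow t p * cmod (char M t))"

end

theory Submission
  imports Defs
begin

lemma norm_iexp[simp]: "norm (iexp x) = 1"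
  by (simp add: norm_exp_i_times)

lemma qs_g_meas[measurable]: "qs_g \<in> borel_measurable borel"
  unfolding qs_g_def by measurable

lemma iexp_add: "iexp (a + b) = iexp a * iexp b"
  by (simp add: distrib_left exp_add)

lemma U_density: "uniform_measure lborel {0<..<1::real} = density lborel (\<lambda>x. ennreal (indicator {0<..<1} x))"
  unfolding uniform_measure_def by (simp add: ennreal_indicator divide_ennreal_def)

lemma si_bound:
  fixes f :: "real \<Rightarrow> 'b::{banach,second_countable_topology}"
  assumes f[measurable]: "f \<in> borel_measurable borel" and B: "\<And>x. norm (f x) \<le> B"
  shows "set_integrable lborel {0<..<1} f"
proof (rule set_integrable_bound[where f="\<lambda>_. B"])
  show "set_integrable lborel {0<..<1::real} (\<lambda>_. B)"
    unfolding set_integrable_def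
    by (intro integrable_scaleR_left) (simp add: integrable_indicator_iff)
  show "AE x in lborel. x \<in> {0<..<1} \<longrightarrow> norm (f x) \<le> norm B"
    using B by (auto intro!: AE_I2 order_trans[OF B])
qed (auto simp: set_borel_measurable_def)

lemma integral_U:
  fixes f :: "real \<Rightarrow> 'b::euclidean_space"
  assumes f[measurable]: "f \<in> borel_measurable borel" and B: "\<And>x. norm (f x) \<le> B"
  shows "integral\<^sup>L (uniform_measure lborel {0<..<1}) f = integral {0..1} f"
    and "f integrable_on {0..1}"
proof -
  have si: "set_integrable lborel {0<..<1} f"
    by (rule si_bound[OF f B])
  have "integral\<^sup>L (uniform_measure lborel {0<..<1}) f = (LINT x:{0<..<1}|lborel. f x)"
    unfolding U_density set_lebesgue_integral_def
    by (subst integral_density) auto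
  also have "\<dots> = integral {0<..<1} f"
    using set_borel_integral_eq_integral(2)[OF si] .
  finally show "integral\<^sup>L (uniform_measure lborel {0<..<1}) f = integral {0..1} f"
    by (simp add: integral_open_interval_real)
  show "f integrable_on {0..1}"
    using set_borel_integral_eq_integral(1)[OF si] 
    by (simp add: integrable_on_open_interval_real)
qed

abbreviation "UU \<equiv> uniform_measure lborel {0<..<1::real}"

lemma prob_UU: "prob_space UU"
  by (rule prob_space_uniform_measure) auto


locale qsl =
  fixes M :: "real measure"
  assumes QS: "quicksort_limit_law M"
begin

lemma rd: "real_distribution M" using QS unfolding quicksort_limit_law_def by auto

interpretation M: real_distribution M by (rule rd)
interpretation U: prob_space UU by (rule prob_UU)
interpretation MM: pair_prob_space M M ..
lemma ps_MM: "prob_space (M \<Otimes>\<^sub>M M)" by (rule MM.P.prob_space_axioms)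
interpretation MMp: prob_space "M \<Otimes>\<^sub>M M" by (rule ps_MM)
interpretation P: pair_prob_space UU "M \<Otimes>\<^sub>M M" 
  by (simp add: pair_prob_space_def pair_sigma_finite_def prob_UU ps_MM prob_space_imp_sigma_finite)

lemma Meq: "M = distr (UU \<Otimes>\<^sub>M (M \<Otimes>\<^sub>M M)) borel (\<lambda>(u, y, z). u * y + (1 - u) * z + qs_g u)"
  using QS unfolding quicksort_limit_law_def by auto

lemma sets_M[measurable_cong, simp]: "sets M = sets borel" by simp

lemma char_P: "char M t = (\<integral>\<omega>. iexp (t * (case \<omega> of (u, y, z) \<Rightarrow> u * y + (1 - u) * z + qs_g u)) \<partial>(UU \<Otimes>\<^sub>M (M \<Otimes>\<^sub>M M)))" (is "_ = ?rhs")
proof -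
  have "char M t = char (distr (UU \<Otimes>\<^sub>M (M \<Otimes>\<^sub>M M)) borel (\<lambda>(u, y, z). u * y + (1 - u) * z + qs_g u)) t"
    using arg_cong[OF Meq, of "\<lambda>N. char N t"] .
  also have "\<dots> = ?rhs" 
    unfolding char_def by (subst integral_distr) auto
  finally show ?thesis .
qed


lemma int_iexp_P: "integrable (UU \<Otimes>\<^sub>M (M \<Otimes>\<^sub>M M)) (\<lambda>\<omega>. iexp (t * (case \<omega> of (u, y, z) \<Rightarrow> u * y + (1 - u) * z + qs_g u)))"
  apply (rule P.integrable_const_bound[where B=1])
   apply simp
  apply measurable
  done

lemma prod_char: "(\<integral>yz. iexp (a * fst yz) * iexp (b * snd yz) \<partial>(M \<Otimes>\<^sub>M M)) = char M a * char M b"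
proof -
  have int: "integrable (M \<Otimes>\<^sub>M M) (\<lambda>yz. iexp (a * fst yz) * iexp (b * snd yz))"
    by (rule MM.P.integrable_const_bound[where B=1]) (auto simp: norm_mult)
  have "(\<integral>yz. iexp (a * fst yz) * iexp (b * snd yz) \<partial>(M \<Otimes>\<^sub>M M)) = (\<integral>y. \<integral>z. iexp (a * y) * iexp (b * z) \<partial>M \<partial>M)"
    using MM.integral_fst'[OF int] by simp
  also have "\<dots> = (\<integral>y. iexp (a * y) * char M b \<partial>M)"
    unfolding char_def by simp
  also have "\<dots> = char M a * char M b"
    unfolding char_def by simp
  finally show ?thesis .
qed

lemma char_eq1: "char M t = (\<integral>u. iexp (t * qs_g u) * (char M (t * u) * char M (t * (1 - u))) \<partial>UU)"
proof -
  have "char M t = (\<integral>u. \<integral>yz. iexp (t * (u * fst yz + (1 - u) * snd yz + qs_g u)) \<partial>(M \<Otimes>\<^sub>M M) \<partial>UU)"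
    unfolding char_P P.integral_fst'[OF int_iexp_P, symmetric] by (simp add: case_prod_beta)
  also have "\<dots> = (\<integral>u. iexp (t * qs_g u) * (\<integral>yz. iexp ((t * u) * fst yz) * iexp ((t * (1 - u)) * snd yz) \<partial>(M \<Otimes>\<^sub>M M)) \<partial>UU)"
  proof (rule Bochner_Integration.integral_cong[OF refl])
    fix u
    have "\<And>yz. iexp (t * (u * fst yz + (1 - u) * snd yz + qs_g u)) = iexp (t * qs_g u) * (iexp ((t * u) * fst yz) * iexp ((t * (1 - u)) * snd yz))"
    proof -
      fix yz :: "real \<times> real"
      have "t * (u * fst yz + (1 - u) * snd yz + qs_g u) = t * qs_g u + ((t * u) * fst yz + (t * (1 - u)) * snd yz)"
        by (simp add: algebra_simps)
      then show "iexp (t * (u * fst yz + (1 - u) * snd yz + qs_g u)) = iexp (t * qs_g u) * (iexp ((t * u) * fst yz) * iexp ((t * (1 - u)) * snd yz))"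
        by (simp only: iexp_add)
    qed
    then show "(\<integral>yz. iexp (t * (u * fst yz + (1 - u) * snd yz + qs_g u)) \<partial>(M \<Otimes>\<^sub>M M)) = iexp (t * qs_g u) * (\<integral>yz. iexp ((t * u) * fst yz) * iexp ((t * (1 - u)) * snd yz) \<partial>(M \<Otimes>\<^sub>M M))"
      by simp
  qed
  also have "\<dots> = (\<integral>u. iexp (t * qs_g u) * (char M (t * u) * char M (t * (1 - u))) \<partial>UU)"
    by (simp only: prod_char)
  finally show ?thesis .
qed

lemma char_le1: "norm (char M t) \<le> integral {0..1} (\<lambda>u. norm (char M (t * u)) * norm (char M (t * (1 - u))))"
proof -
  have "norm (char M t) \<le> (\<integral>u. norm (iexp (t * qs_g u) * (char M (t * u) * char M (t * (1 - u)))) \<partial>UU)"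
    unfolding char_eq1[of t] by (rule integral_norm_bound)
  also have "\<dots> = (\<integral>u. norm (char M (t * u)) * norm (char M (t * (1 - u))) \<partial>UU)"
    by (simp add: norm_mult)
  also have "\<dots> = integral {0..1} (\<lambda>u. norm (char M (t * u)) * norm (char M (t * (1 - u))))"
    by (rule integral_U[where B=1]) (auto simp: norm_mult intro!: mult_le_one M.cmod_char_le_1)
  finally show ?thesis .
qed

lemma char_le2:
  assumes C: "\<And>a b. norm (integral {0..1} (\<lambda>u. iexp (t * (u * a + (1 - u) * b + qs_g u)))) \<le> C"
  shows "norm (char M t) \<le> C"
proof -
  define f where "f = (\<lambda>u yz. iexp (t * (u * fst yz + (1 - u) * snd yz + qs_g u)))"
  have int: "integrable (UU \<Otimes>\<^sub>M (M \<Otimes>\<^sub>M M)) (case_prod f)"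
  proof -
    have "integrable (UU \<Otimes>\<^sub>M (M \<Otimes>\<^sub>M M)) (\<lambda>\<omega>. f (fst \<omega>) (snd \<omega>))"
      unfolding f_def
      apply (rule P.integrable_const_bound[where B=1])
       apply simp
      apply measurable
      done
    moreover have "case_prod f = (\<lambda>\<omega>. f (fst \<omega>) (snd \<omega>))" by (simp add: fun_eq_iff split_beta)
    ultimately show ?thesis by simp
  qed
  have "char M t = (\<integral>yz. (\<integral>u. f u yz \<partial>UU) \<partial>(M \<Otimes>\<^sub>M M))"
  proof -
    have "char M t = integral\<^sup>L (UU \<Otimes>\<^sub>M (M \<Otimes>\<^sub>M M)) (case_prod f)"
      unfolding char_P by (rule arg_cong[where f="integral\<^sup>L _"]) (auto simp: fun_eq_iff f_def)
    then show ?thesis using P.integral_snd[OF int] by simp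
  qed
  also have "\<dots> = (\<integral>yz. integral {0..1} (\<lambda>u. f u yz) \<partial>(M \<Otimes>\<^sub>M M))"
    by (rule Bochner_Integration.integral_cong[OF refl], rule integral_U[where B=1]) (auto simp: f_def)
  finally have eq: "char M t = (\<integral>yz. integral {0..1} (\<lambda>u. f u yz) \<partial>(M \<Otimes>\<^sub>M M))" .
  have int2: "integrable (M \<Otimes>\<^sub>M M) (\<lambda>yz. integral {0..1} (\<lambda>u. f u yz))"
  proof -
    have "integrable (M \<Otimes>\<^sub>M M) (\<lambda>yz. \<integral>u. f u yz \<partial>UU)" by (rule P.integrable_snd[OF int])
    moreover have "\<And>yz. (\<integral>u. f u yz \<partial>UU) = integral {0..1} (\<lambda>u. f u yz)"
      by (rule integral_U[where B=1]) (auto simp: f_def)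
    ultimately show ?thesis by simp
  qed
  have "norm (char M t) \<le> (\<integral>yz. norm (integral {0..1} (\<lambda>u. f u yz)) \<partial>(M \<Otimes>\<^sub>M M))"
    unfolding eq by (rule integral_norm_bound)
  also have "\<dots> \<le> (\<integral>yz. C \<partial>(M \<Otimes>\<^sub>M M))"
    by (rule integral_mono) (use int2 C in \<open>auto simp: f_def\<close>)
  also have "\<dots> = C" by (simp add: MM.P.prob_space)
  finally show ?thesis .
qed

end

lemma iexpF_deriv:
  assumes "(F has_real_derivative D) (at u within S)"
  shows "((\<lambda>u. iexp (F u)) has_vector_derivative (\<i> * of_real D * iexp (F u))) (at u within S)"
proof -
  have 1: "((\<lambda>u. \<i> * complex_of_real (F u)) has_vector_derivative (\<i> * of_real D)) (at u within S)"
    by (intro has_vector_derivative_mult_right has_vector_derivative_of_real assms)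
  have 2: "(exp has_field_derivative exp (\<i> * complex_of_real (F u))) (at ((\<lambda>u. \<i> * complex_of_real (F u)) u) within (\<lambda>u. \<i> * complex_of_real (F u)) ` S)"
    by (rule has_field_derivative_at_within) (simp add: DERIV_exp)
  show ?thesis
    using field_vector_diff_chain_within[OF 1 2] by (simp add: o_def)
qed

lemma alg1:
  fixes e :: complex and a b :: real
  assumes "a \<noteq> 0"
  shows "e * (- \<i> * of_real (- (b * inverse (a ^ Suc (Suc 0))))) + (\<i> * of_real a * e) * (- \<i> * complex_of_real (inverse a))
     = e + \<i> * (e * of_real (b * inverse (a^2)))"
proof -
  have "complex_of_real a * complex_of_real (inverse a) = 1" using assms
    by (simp flip: of_real_mult)
  then show ?thesis by (simp add: algebra_simps numeral_2_eq_2)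
qed

lemma inv_deriv:
  assumes "(f has_real_derivative d) (at x within s)" "f x \<noteq> 0"
  shows "((\<lambda>x. inverse (f x)) has_real_derivative (- (d * inverse (f x ^ 2)))) (at x within s)"
  using DERIV_inverse_fun[OF assms] by (simp add: numeral_2_eq_2)

lemma ibp_bound:
  fixes F F' F'' :: "real \<Rightarrow> real"
  assumes cd: "c \<le> d" and dpos: "\<delta> > 0"
    and D1: "\<And>u. u \<in> {c..d} \<Longrightarrow> (F has_real_derivative F' u) (at u)"
    and D2: "\<And>u. u \<in> {c..d} \<Longrightarrow> (F' has_real_derivative F'' u) (at u)"
    and F2nn: "\<And>u. u \<in> {c..d} \<Longrightarrow> F'' u \<ge> 0"
    and F1: "(\<forall>u\<in>{c..d}. \<delta> \<le> F' u) \<or> (\<forall>u\<in>{c..d}. F' u \<le> -\<delta>)"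
    and cont: "continuous_on {c..d} F''"
  shows "norm (integral {c..d} (\<lambda>u. iexp (F u))) \<le> 2 / \<delta>"
proof -
  have nz: "F' u \<noteq> 0" if "u \<in> {c..d}" for u
  proof -
    from F1 have "\<delta> \<le> F' u \<or> F' u \<le> -\<delta>" using that by blast
    thus ?thesis using dpos by linarith
  qed
  define G where "G u = iexp (F u) * (- \<i> * complex_of_real (inverse (F' u)))" for u
  define k where "k u = iexp (F u) * complex_of_real (F'' u * inverse (F' u ^ 2))" for u
  have Gd: "(G has_vector_derivative (iexp (F u) + \<i> * k u)) (at u within {c..d})" if u: "u \<in> {c..d}" for u
  proof -
    have a: "((\<lambda>u. iexp (F u)) has_vector_derivative (\<i> * of_real (F' u) * iexp (F u))) (at u within {c..d})"
      by (rule iexpF_deriv, rule has_field_derivative_at_within, rule D1[OF u])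
    have b0: "((\<lambda>u. inverse (F' u)) has_real_derivative (- (F'' u * inverse (F' u ^ 2)))) (at u within {c..d})"
      by (rule inv_deriv, rule has_field_derivative_at_within, rule D2[OF u], rule nz[OF u])
    have b: "((\<lambda>u. - \<i> * complex_of_real (inverse (F' u))) has_vector_derivative (- \<i> * of_real (- (F'' u * inverse (F' u ^ 2))))) (at u within {c..d})"
      by (intro has_vector_derivative_mult_right has_vector_derivative_of_real b0)
    have "(G has_vector_derivative (iexp (F u) * (- \<i> * of_real (- (F'' u * inverse (F' u ^ 2)))) + (\<i> * of_real (F' u) * iexp (F u)) * (- \<i> * complex_of_real (inverse (F' u))))) (at u within {c..d})"
      unfolding G_def by (rule has_vector_derivative_mult[OF a b])
    moreover have "iexp (F u) * (- \<i> * of_real (- (F'' u * inverse (F' u ^ 2)))) + (\<i> * of_real (F' u) * iexp (F u)) * (- \<i> * complex_of_real (inverse (F' u))) = iexp (F u) + \<i> * k u"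
      unfolding k_def using alg1[OF nz[OF u], of "iexp (F u)" "F'' u"] by (simp add: numeral_2_eq_2)
    ultimately show ?thesis by (rule has_vector_derivative_eq_rhs)
  qed
  have FTC: "((\<lambda>u. iexp (F u) + \<i> * k u) has_integral (G d - G c)) {c..d}"
    by (rule fundamental_theorem_of_calculus[OF cd Gd])
  have contF': "continuous_on {c..d} F'"
  proof (rule continuous_on_vector_derivative[where f'=F''])
    fix u assume u: "u \<in> {c..d}"
    have "(F' has_real_derivative F'' u) (at u within {c..d})"
      by (rule has_field_derivative_at_within, rule D2[OF u])
    then show "(F' has_vector_derivative F'' u) (at u within {c..d})"
      by (simp add: has_real_derivative_iff_has_vector_derivative)
  qed
  have contF: "continuous_on {c..d} F"
  proof (rule continuous_on_vector_derivative[where f'=F'])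
    fix u assume u: "u \<in> {c..d}"
    have "(F has_real_derivative F' u) (at u within {c..d})"
      by (rule has_field_derivative_at_within, rule D1[OF u])
    then show "(F has_vector_derivative F' u) (at u within {c..d})"
      by (simp add: has_real_derivative_iff_has_vector_derivative)
  qed
  have contk: "continuous_on {c..d} k"
    unfolding k_def using nz
    by (intro continuous_intros contF contF' cont) auto
  have intk: "k integrable_on {c..d}"
    by (rule integrable_continuous_interval[OF contk])
  have H: "((\<lambda>u. F'' u * inverse (F' u ^ 2)) has_integral ((- inverse (F' d)) - (- inverse (F' c)))) {c..d}"
  proof (rule fundamental_theorem_of_calculus[OF cd])
    fix u assume u: "u \<in> {c..d}"
    have "((\<lambda>u. inverse (F' u)) has_real_derivative (- (F'' u * inverse (F' u ^ 2)))) (at u within {c..d})"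
      by (rule inv_deriv, rule has_field_derivative_at_within, rule D2[OF u], rule nz[OF u])
    then have "((\<lambda>u. - inverse (F' u)) has_real_derivative (F'' u * inverse (F' u ^ 2))) (at u within {c..d})"
      using DERIV_minus by fastforce
    then show "((\<lambda>u. - inverse (F' u)) has_vector_derivative (F'' u * inverse (F' u ^ 2))) (at u within {c..d})"
      by (simp add: has_real_derivative_iff_has_vector_derivative)
  qed
  have eq: "integral {c..d} (\<lambda>u. iexp (F u)) = (G d - G c) - \<i> * integral {c..d} k"
  proof -
    have "((\<lambda>u. (iexp (F u) + \<i> * k u) - \<i> * k u) has_integral ((G d - G c) - \<i> * integral {c..d} k)) {c..d}"
      by (rule has_integral_diff[OF FTC], rule has_integral_mult_right, rule integrable_integral[OF intk])
    then show ?thesis by (simp add: integral_unique)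
  qed
  have nk: "norm (integral {c..d} k) \<le> (- inverse (F' d)) - (- inverse (F' c))"
  proof -
    have "norm (integral {c..d} k) \<le> integral {c..d} (\<lambda>u. F'' u * inverse (F' u ^ 2))"
    proof (rule integral_norm_bound_integral[OF intk])
      show "(\<lambda>u. F'' u * inverse (F' u ^ 2)) integrable_on {c..d}" using H by (rule has_integral_integrable)
      fix u assume u: "u \<in> {c..d}"
      have "norm (k u) = \<bar>F'' u * inverse (F' u ^ 2)\<bar>"
        unfolding k_def norm_mult norm_iexp norm_of_real by simp
      also have "\<dots> = F'' u * inverse (F' u ^ 2)" using F2nn[OF u] by simp
      finally show "norm (k u) \<le> F'' u * inverse (F' u ^ 2)" by simp
    qed
    also have "\<dots> = (- inverse (F' d)) - (- inverse (F' c))" using H by (rule integral_unique)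
    finally show ?thesis .
  qed
  have nG: "norm (G u) = inverse \<bar>F' u\<bar>" for u
    unfolding G_def norm_mult norm_iexp norm_of_real by (simp add: norm_inverse)
  have "norm (integral {c..d} (\<lambda>u. iexp (F u))) \<le> norm (G d) + norm (G c) + norm (integral {c..d} k)"
    unfolding eq using norm_triangle_ineq4[of "G d - G c" "\<i> * integral {c..d} k"] norm_triangle_ineq4[of "G d" "G c"]
    by (simp add: norm_mult)
  also have "\<dots> \<le> inverse \<bar>F' d\<bar> + inverse \<bar>F' c\<bar> + ((- inverse (F' d)) - (- inverse (F' c)))"
    using nk nG by simp
  also have "\<dots> \<le> 2 / \<delta>"
    using F1
  proof
    assume A: "\<forall>u\<in>{c..d}. \<delta> \<le> F' u"
    then have "\<delta> \<le> F' c" "\<delta> \<le> F' d" using cd by auto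
    moreover have "inverse (F' c) \<le> inverse \<delta>" using calculation dpos by (simp add: le_imp_inverse_le)
    ultimately show ?thesis using dpos by (simp add: divide_inverse)
  next
    assume A: "\<forall>u\<in>{c..d}. F' u \<le> -\<delta>"
    then have "F' c \<le> -\<delta>" "F' d \<le> -\<delta>" using cd by auto
    moreover have "inverse (- F' d) \<le> inverse \<delta>" by (rule le_imp_inverse_le) (use calculation dpos in auto)
    ultimately show ?thesis using dpos by (simp add: divide_inverse)
  qed
  finally show ?thesis .
qed

lemma mono_F':
  fixes F' F'' :: "real \<Rightarrow> real"
  assumes D2: "\<And>u. u \<in> {c..d} \<Longrightarrow> (F' has_real_derivative F'' u) (at u)"
    and F2: "\<And>u. u \<in> {c..d} \<Longrightarrow> F'' u \<ge> lam"
    and xy: "c \<le> x" "x \<le> y" "y \<le> d"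
  shows "F' y - F' x \<ge> lam * (y - x)"
proof (cases "x = y")
  case True then show ?thesis by simp
next
  case False
  then have "x < y" using xy by simp
  from MVT2[OF this, of F' F''] D2 xy obtain z where z: "x < z" "z < y" "F' y - F' x = (y - x) * F'' z"
    by auto
  have "F'' z \<ge> lam" using F2 z xy by auto
  then show ?thesis using z \<open>x < y\<close> by (simp add: mult.commute mult_right_mono)
qed

lemma norm_int_le_len:
  assumes "a \<le> b" "f integrable_on {a..b}" "\<And>u. u \<in> {a..b} \<Longrightarrow> norm (f u :: complex) \<le> 1"
  shows "norm (integral {a..b} f) \<le> b - a"
proof -
  have "norm (integral {a..b} f) \<le> integral {a..b} (\<lambda>_. 1::real)"
    by (rule integral_norm_bound_integral) (use assms in auto)
  also have "\<dots> = b - a" using assms by simp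
  finally show ?thesis .
qed

lemma vdc_abstract:
  fixes F F' F'' :: "real \<Rightarrow> real"
  assumes cd: "c \<le> d" and lpos: "lam > 0" and dpos: "\<delta> > 0"
    and D1: "\<And>u. u \<in> {c..d} \<Longrightarrow> (F has_real_derivative F' u) (at u)"
    and D2: "\<And>u. u \<in> {c..d} \<Longrightarrow> (F' has_real_derivative F'' u) (at u)"
    and F2: "\<And>u. u \<in> {c..d} \<Longrightarrow> F'' u \<ge> lam"
    and cont: "continuous_on {c..d} F''"
  shows "norm (integral {c..d} (\<lambda>u. iexp (F u))) \<le> 4 / \<delta> + 2 * \<delta> / lam"
proof -
  have mono: "F' y - F' x \<ge> lam * (y - x)" if "c \<le> x" "x \<le> y" "y \<le> d" for x y
    by (rule mono_F'[OF D2 F2 that]) auto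
  have monoF: "F' x \<le> F' y" if "c \<le> x" "x \<le> y" "y \<le> d" for x y
  proof -
    have "0 \<le> lam * (y - x)" using lpos that by simp
    then show ?thesis using mono[OF that] by linarith
  qed
  have contF': "continuous_on {c..d} F'"
  proof (rule continuous_on_vector_derivative[where f'=F''])
    fix u assume u: "u \<in> {c..d}"
    have "(F' has_real_derivative F'' u) (at u within {c..d})"
      by (rule has_field_derivative_at_within, rule D2[OF u])
    then show "(F' has_vector_derivative F'' u) (at u within {c..d})"
      by (simp add: has_real_derivative_iff_has_vector_derivative)
  qed
  have contF: "continuous_on {c..d} F"
  proof (rule continuous_on_vector_derivative[where f'=F'])
    fix u assume u: "u \<in> {c..d}"
    have "(F has_real_derivative F' u) (at u within {c..d})"
      by (rule has_field_derivative_at_within, rule D1[OF u])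
    then show "(F has_vector_derivative F' u) (at u within {c..d})"
      by (simp add: has_real_derivative_iff_has_vector_derivative)
  qed
  have intg: "(\<lambda>u. iexp (F u)) integrable_on {c..d}"
    by (rule integrable_continuous_interval) (intro continuous_intros contF)
  have F2nn: "\<And>u. u \<in> {c..d} \<Longrightarrow> F'' u \<ge> 0" using F2 lpos by (meson less_imp_le order_trans)
  have piece: "norm (integral {x..y} (\<lambda>u. iexp (F u))) \<le> 2 / \<delta>"
    if xy: "c \<le> x" "x \<le> y" "y \<le> d" and sg: "(\<forall>u\<in>{x..y}. \<delta> \<le> F' u) \<or> (\<forall>u\<in>{x..y}. F' u \<le> -\<delta>)" for x y
  proof (rule ibp_bound[OF xy(2) dpos _ _ _ sg])
    show "\<And>u. u \<in> {x..y} \<Longrightarrow> (F has_real_derivative F' u) (at u)" using D1 xy by auto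
    show "\<And>u. u \<in> {x..y} \<Longrightarrow> (F' has_real_derivative F'' u) (at u)" using D2 xy by auto
    show "\<And>u. u \<in> {x..y} \<Longrightarrow> F'' u \<ge> 0" using F2nn xy by auto
    show "continuous_on {x..y} F''" by (rule continuous_on_subset[OF cont]) (use xy in auto)
  qed
  show ?thesis
  proof (cases "F' d \<le> -\<delta>")
    case True
    have "\<forall>u\<in>{c..d}. F' u \<le> -\<delta>"
    proof
      fix u assume "u \<in> {c..d}" then have "F' u \<le> F' d" by (intro monoF) auto
      then show "F' u \<le> -\<delta>" using True by linarith
    qed
    then have "norm (integral {c..d} (\<lambda>u. iexp (F u))) \<le> 2 / \<delta>"
      using piece[of c d] cd by auto
    moreover have "2 / \<delta> \<le> 4 / \<delta> + 2 * \<delta> / lam"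
      using dpos lpos by (simp add: divide_right_mono add_increasing2)
    ultimately show ?thesis by linarith
  next
    case nA: False
    show ?thesis
    proof (cases "F' c \<ge> \<delta>")
      case True
      have "\<forall>u\<in>{c..d}. \<delta> \<le> F' u"
      proof
        fix u assume "u \<in> {c..d}" then have "F' c \<le> F' u" by (intro monoF) auto
        then show "\<delta> \<le> F' u" using True by linarith
      qed
      then have "norm (integral {c..d} (\<lambda>u. iexp (F u))) \<le> 2 / \<delta>"
        using piece[of c d] cd by auto
      moreover have "2 / \<delta> \<le> 4 / \<delta> + 2 * \<delta> / lam"
      using dpos lpos by (simp add: divide_right_mono add_increasing2)
    ultimately show ?thesis by linarith
    next
      case nB: False
      obtain \<alpha> where al: "c \<le> \<alpha>" "\<alpha> \<le> d" "\<alpha> = c \<or> F' \<alpha> = -\<delta>" "F' \<alpha> \<ge> -\<delta>"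
      proof (cases "F' c < -\<delta>")
        case True
        from IVT'[of F' c "-\<delta>" d, OF _ _ cd contF'] True nA obtain x where "c \<le> x" "x \<le> d" "F' x = -\<delta>"
          by force
        then show ?thesis using that by auto
      next
        case False
        then show ?thesis using that[of c] cd by auto
      qed
      have Fal: "F' \<alpha> \<le> \<delta>" using al nB dpos by auto
      obtain \<beta> where be: "\<alpha> \<le> \<beta>" "\<beta> \<le> d" "\<beta> = d \<or> F' \<beta> = \<delta>" "F' \<beta> \<le> \<delta>"
      proof (cases "F' d > \<delta>")
        case True
        have ct: "continuous_on {\<alpha>..d} F'" using contF' by (rule continuous_on_subset) (use al in auto)
        from IVT'[of F' \<alpha> "\<delta>" d, OF _ _ al(2) ct] True Fal obtain x where "\<alpha> \<le> x" "x \<le> d" "F' x = \<delta>"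
          by force
        then show ?thesis using that by auto
      next
        case False
        then show ?thesis using that[of d] al by auto
      qed
      have i1: "norm (integral {c..\<alpha>} (\<lambda>u. iexp (F u))) \<le> 2 / \<delta>"
      proof (cases "\<alpha> = c")
        case True then show ?thesis using dpos by simp
      next
        case False
        then have "F' \<alpha> = -\<delta>" using al by auto
        then have "\<forall>u\<in>{c..\<alpha>}. F' u \<le> -\<delta>"
          using monoF al by (metis atLeastAtMost_iff order_trans)
        then show ?thesis using piece[of c \<alpha>] al by auto
      qed
      have i3: "norm (integral {\<beta>..d} (\<lambda>u. iexp (F u))) \<le> 2 / \<delta>"
      proof (cases "\<beta> = d")
        case True then show ?thesis using dpos by simp
      next
        case False
        then have "F' \<beta> = \<delta>" using be by auto
        then have "\<forall>u\<in>{\<beta>..d}. \<delta> \<le> F' u"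
          using monoF al be by (metis atLeastAtMost_iff order_trans)
        then show ?thesis using piece[of \<beta> d] al be by auto
      qed
      have i2: "norm (integral {\<alpha>..\<beta>} (\<lambda>u. iexp (F u))) \<le> 2 * \<delta> / lam"
      proof -
        have "norm (integral {\<alpha>..\<beta>} (\<lambda>u. iexp (F u))) \<le> \<beta> - \<alpha>"
          by (rule norm_int_le_len) (use be intg al in \<open>auto intro: integrable_on_subinterval\<close>)
        also have "\<dots> \<le> 2 * \<delta> / lam"
        proof -
          have "lam * (\<beta> - \<alpha>) \<le> F' \<beta> - F' \<alpha>" by (rule mono) (use al be in auto)
          also have "\<dots> \<le> 2 * \<delta>" using al be by auto
          finally show ?thesis using lpos by (simp add: field_simps)
        qed
        finally show ?thesis .
      qed
      have "integral {c..d} (\<lambda>u. iexp (F u)) = integral {c..\<alpha>} (\<lambda>u. iexp (F u)) + integral {\<alpha>..d} (\<lambda>u. iexp (F u))"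
        using Henstock_Kurzweil_Integration.integral_combine[where f="\<lambda>u. iexp (F u)" and a=c and c=\<alpha> and b=d] al intg by simp
      also have "integral {\<alpha>..d} (\<lambda>u. iexp (F u)) = integral {\<alpha>..\<beta>} (\<lambda>u. iexp (F u)) + integral {\<beta>..d} (\<lambda>u. iexp (F u))"
      proof -
        have "(\<lambda>u. iexp (F u)) integrable_on {\<alpha>..d}" by (rule integrable_on_subinterval[OF intg]) (use al in auto)
        then show ?thesis using Henstock_Kurzweil_Integration.integral_combine[where f="\<lambda>u. iexp (F u)" and a=\<alpha> and c=\<beta> and b=d] be by simp
      qed
      finally have e: "integral {c..d} (\<lambda>u. iexp (F u)) = integral {c..\<alpha>} (\<lambda>u. iexp (F u)) + (integral {\<alpha>..\<beta>} (\<lambda>u. iexp (F u)) + integral {\<beta>..d} (\<lambda>u. iexp (F u)))" .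
      show ?thesis unfolding e
        using norm_triangle_ineq[of "integral {c..\<alpha>} (\<lambda>u. iexp (F u))" "integral {\<alpha>..\<beta>} (\<lambda>u. iexp (F u)) + integral {\<beta>..d} (\<lambda>u. iexp (F u))"]
          norm_triangle_ineq[of "integral {\<alpha>..\<beta>} (\<lambda>u. iexp (F u))" "integral {\<beta>..d} (\<lambda>u. iexp (F u))"] i1 i2 i3
        by linarith
    qed
  qed
qed

lemma qs_g_deriv:
  assumes "0 < u" "u < 1"
  shows "(qs_g has_real_derivative (2 * ln u - 2 * ln (1 - u))) (at u)"
proof -
  have "((\<lambda>u. 2 * u * ln u + 2 * (1 - u) * ln (1 - u) + 1) has_real_derivative
      (2 * ln u + 2 * u * (1 / u) + ((-2) * ln (1 - u) + 2 * (1 - u) * (- 1 / (1 - u))) + 0)) (at u)"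
    using assms by (auto intro!: derivative_eq_intros)
  moreover have "2 * ln u + 2 * u * (1 / u) + ((-2) * ln (1 - u) + 2 * (1 - u) * (- 1 / (1 - u))) + 0 = 2 * ln u - 2 * ln (1 - u)"
    using assms by (simp add: field_simps)
  ultimately show ?thesis unfolding qs_g_def[abs_def] by simp
qed

lemma vdc_closed:
  fixes t a c d :: real
  assumes t: "t > 0" and c: "0 < c" "c \<le> d" "d < 1"
  shows "norm (integral {c..d} (\<lambda>u. iexp (t * (a * u + qs_g u)))) \<le> 2 / sqrt t"
proof -
  define F where "F u = t * (a * u + qs_g u)" for u
  define F' where "F' u = t * (a + (2 * ln u - 2 * ln (1 - u)))" for u
  define F'' where "F'' u = t * (2 / u + 2 / (1 - u))" for u
  have D1: "(F has_real_derivative F' u) (at u)" if "u \<in> {c..d}" for u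
  proof -
    have u: "0 < u" "u < 1" using that c by auto
    have "((\<lambda>u. t * (a * u + qs_g u)) has_real_derivative t * (a * 1 + (2 * ln u - 2 * ln (1 - u)))) (at u)"
      by (rule DERIV_cmult, rule DERIV_add, rule DERIV_cmult[OF DERIV_ident], rule qs_g_deriv[OF u])
    then show ?thesis unfolding F_def[abs_def] F'_def by simp
  qed
  have D2: "(F' has_real_derivative F'' u) (at u)" if "u \<in> {c..d}" for u
  proof -
    have u: "0 < u" "u < 1" using that c by auto
    have "((\<lambda>u. t * (a + (2 * ln u - 2 * ln (1 - u)))) has_real_derivative t * (0 + (2 * (1 / u) - 2 * (- 1 / (1 - u))))) (at u)"
      using u by (auto intro!: derivative_eq_intros)
    then show ?thesis unfolding F'_def[abs_def] F''_def by (simp add: field_simps)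
  qed
  have F2: "F'' u \<ge> 8 * t" if "u \<in> {c..d}" for u
  proof -
    have u: "0 < u" "u < 1" using that c by auto
    have "2 / u + 2 / (1 - u) = 2 / (u * (1 - u))" using u by (simp add: field_simps)
    also have "\<dots> \<ge> 8"
    proof -
      have "(u - 1/2)^2 \<ge> 0" by simp
      then have "u * (1 - u) \<le> 1/4" by (simp add: power2_eq_square algebra_simps)
      moreover have "u * (1 - u) > 0" using u by simp
      ultimately show ?thesis by (simp add: field_simps)
    qed
    finally show ?thesis unfolding F''_def using t by simp
  qed
  have cont: "continuous_on {c..d} F''"
    unfolding F''_def using c by (intro continuous_intros) auto
  have "norm (integral {c..d} (\<lambda>u. iexp (F u))) \<le> 4 / (4 * sqrt t) + 2 * (4 * sqrt t) / (8 * t)"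
    by (rule vdc_abstract[OF c(2) _ _ D1 D2 F2 cont]) (use t in auto)
  also have "4 / (4 * sqrt t) + 2 * (4 * sqrt t) / (8 * t) = 2 / sqrt t"
  proof -
    have "sqrt t * sqrt t = t" using t by simp
    then show ?thesis using t by (simp add: field_simps)
  qed
  finally show ?thesis unfolding F_def .
qed

lemma int01_iexp:
  fixes h :: "real \<Rightarrow> real"
  assumes [measurable]: "h \<in> borel_measurable borel"
  shows "(\<lambda>u. iexp (h u)) integrable_on {0..1}"
  by (rule integral_U(2)[where B=1]) auto

lemma int_split3:
  fixes f :: "real \<Rightarrow> complex"
  assumes f: "f integrable_on {0..1}" and e: "0 < e" "e < 1/2"
  shows "integral {0..1} f = integral {0..e} f + (integral {e..1-e} f + integral {1-e..1} f)"
proof -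
  have "integral {0..1} f = integral {0..e} f + integral {e..1} f"
    using Henstock_Kurzweil_Integration.integral_combine[where f=f and a=0 and c=e and b=1] f e by simp
  moreover have "integral {e..1} f = integral {e..1-e} f + integral {1-e..1} f"
  proof -
    have "f integrable_on {e..1}" by (rule integrable_on_subinterval[OF f]) (use e in auto)
    then show ?thesis using Henstock_Kurzweil_Integration.integral_combine[where f=f and a=e and c="1-e" and b=1] e by simp
  qed
  ultimately show ?thesis by simp
qed

lemma vdc01:
  fixes t a :: real
  assumes t: "t > 0"
  shows "norm (integral {0..1} (\<lambda>u. iexp (t * (a * u + qs_g u)))) \<le> 2 / sqrt t"
proof (rule field_le_epsilon)
  fix e :: real assume e0: "0 < e"
  define f where "f = (\<lambda>u. iexp (t * (a * u + qs_g u)))"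
  define \<epsilon> where "\<epsilon> = min (e / 2) (1/4)"
  have eps: "0 < \<epsilon>" "\<epsilon> < 1/2" "2 * \<epsilon> \<le> e" using e0 by (auto simp: \<epsilon>_def)
  have f: "f integrable_on {0..1}" unfolding f_def by (rule int01_iexp) measurable
  have n1: "norm (integral {0..\<epsilon>} f) \<le> \<epsilon> - 0"
    by (rule norm_int_le_len) (use eps f in \<open>auto intro: integrable_on_subinterval simp: f_def\<close>)
  have n3: "norm (integral {1-\<epsilon>..1} f) \<le> 1 - (1 - \<epsilon>)"
    by (rule norm_int_le_len) (use eps f in \<open>auto intro: integrable_on_subinterval simp: f_def\<close>)
  have n2: "norm (integral {\<epsilon>..1-\<epsilon>} f) \<le> 2 / sqrt t"
    unfolding f_def by (rule vdc_closed) (use t eps in auto)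
  have "norm (integral {0..1} f) \<le> norm (integral {0..\<epsilon>} f) + (norm (integral {\<epsilon>..1-\<epsilon>} f) + norm (integral {1-\<epsilon>..1} f))"
    unfolding int_split3[OF f eps(1,2)]
    by (meson add_left_mono norm_triangle_ineq order_trans)
  then show "norm (integral {0..1} f) \<le> 2 / sqrt t + e" using n1 n2 n3 eps by linarith
qed

lemma cnj_iexp: "cnj (iexp x) = iexp (- x)"
  by (simp add: exp_cnj)

lemma vdc_full:
  fixes t a b :: real
  assumes t: "t \<noteq> 0"
  shows "norm (integral {0..1} (\<lambda>u. iexp (t * (u * a + (1 - u) * b + qs_g u)))) \<le> 2 / sqrt \<bar>t\<bar>"
proof -
  have eq: "iexp (t * (u * a + (1 - u) * b + qs_g u)) = iexp (t * b) * iexp (t * ((a - b) * u + qs_g u))" for u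
  proof -
    have "t * (u * a + (1 - u) * b + qs_g u) = t * b + t * ((a - b) * u + qs_g u)" by (simp add: algebra_simps)
    then show ?thesis by (simp only: iexp_add)
  qed
  have "norm (integral {0..1} (\<lambda>u. iexp (t * (u * a + (1 - u) * b + qs_g u)))) = norm (integral {0..1} (\<lambda>u. iexp (t * ((a - b) * u + qs_g u))))"
    unfolding eq Henstock_Kurzweil_Integration.integral_mult_right by (simp add: norm_mult)
  also have "\<dots> \<le> 2 / sqrt \<bar>t\<bar>"
  proof (cases "t > 0")
    case True then show ?thesis using vdc01[OF True, of "a - b"] by simp
  next
    case False
    then have t': "-t > 0" using t by simp
    have "integral {0..1} (\<lambda>u. iexp (t * ((a - b) * u + qs_g u))) = cnj (integral {0..1} (\<lambda>u. iexp ((-t) * ((a - b) * u + qs_g u))))"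
      unfolding integral_cnj cnj_iexp by simp
    then show ?thesis using vdc01[OF t', of "a - b"] t' by simp
  qed
  finally show ?thesis .
qed

definition PP :: "real \<Rightarrow> real" where
  "PP u = 1 + 3/4 * u + 21/32 * u^2 + 77/128 * u^3 + 1155/832 * u^4"
definition PP' :: "real \<Rightarrow> real" where
  "PP' u = 3/4 + 21/16 * u + 231/128 * u^2 + 1155/208 * u^3"
definition QQ :: "real \<Rightarrow> real" where
  "QQ u = 4 + 3/5 * u + 7/24 * u^2 + 77/416 * u^3 + 1155/3536 * u^4"

lemma PP_deriv: "(PP has_real_derivative PP' u) (at u)"
  unfolding PP_def[abs_def] PP'_def
  by (rule derivative_eq_intros refl)+ (simp add: field_simps)

lemma PP_key: "4 * PP' u * (1 - u) - 3 * PP u = 21945/1664 * u^3 * (1 - 2 * u)"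
  unfolding PP_def PP'_def by algebra

lemma PP_pos: "0 \<le> u \<Longrightarrow> 0 < PP u"
  unfolding PP_def by (simp add: add_pos_nonneg)

lemma q_mono:
  assumes u: "0 \<le> u" "u \<le> 1/2"
  shows "1 \<le> PP u ^ 4 * (1 - u) ^ 3"
proof -
  define q where "q u = PP u ^ 4 * (1 - u) ^ 3" for u
  have d: "(q has_real_derivative (PP u ^ 3 * (1 - u)^2 * (21945/1664 * u^3 * (1 - 2 * u)))) (at u)" for u
  proof -
    have A: "(q has_real_derivative (PP u ^ 4 * (3 * (1 - u)^2 * (0 - 1)) + (4 * PP u ^ 3 * PP' u) * (1 - u)^3)) (at u)"
      unfolding q_def[abs_def]
      by (auto intro!: derivative_eq_intros PP_deriv)
    have B: "PP u ^ 4 * (3 * (1 - u)^2 * (0 - 1)) + (4 * PP u ^ 3 * PP' u) * (1 - u)^3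
        = PP u ^ 3 * (1 - u)^2 * (4 * PP' u * (1 - u) - 3 * PP u)"
      by algebra
    have "(q has_real_derivative PP u ^ 3 * (1 - u)^2 * (4 * PP' u * (1 - u) - 3 * PP u)) (at u)"
      by (rule DERIV_cong[OF A B])
    then show ?thesis by (simp only: PP_key)
  qed
  have "q 0 \<le> q u"
  proof (rule DERIV_nonneg_imp_increasing_open[OF u(1)])
    fix x assume x: "0 < x" "x < u"
    have "0 \<le> PP x ^ 3 * (1 - x)^2 * (21945/1664 * x^3 * (1 - 2 * x))"
      using x u PP_pos[of x] by (intro mult_nonneg_nonneg) auto
    then show "\<exists>y. (q has_real_derivative y) (at x) \<and> 0 \<le> y" using d by blast
  next
    show "continuous_on {0..u} q" unfolding q_def PP_def by (intro continuous_intros)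
  qed
  moreover have "q 0 = 1" unfolding q_def PP_def by simp
  ultimately show ?thesis unfolding q_def by simp
qed

lemma PP_bound:
  assumes u: "0 \<le> u" "u \<le> 1/2"
  shows "(1 - u) powr (-3/4) \<le> PP u"
proof -
  define x where "x = (1 - u) powr (-3/4)"
  have x0: "0 < x" using u by (simp add: x_def)
  have u1: "0 < 1 - u" using u by simp
  have "x ^ 4 = (1 - u) powr (of_nat 4 * (-3/4))"
    unfolding x_def by (rule powr_power) (use u1 in simp)
  also have "\<dots> = inverse ((1 - u) powr (real 3))"
    by (simp add: powr_minus[symmetric])
  also have "\<dots> = 1 / (1 - u) ^ 3"
    by (simp only: powr_realpow[OF u1]) (simp add: divide_inverse)
  also have "\<dots> \<le> PP u ^ 4"
    using q_mono[OF u] u by (simp add: field_simps)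
  finally have "x ^ 4 \<le> PP u ^ 4" .
  then have "x \<le> PP u"
    using power_le_imp_le_base[of x 3 "PP u"] PP_pos[OF u(1)] by (simp add: numeral_eq_Suc)
  then show ?thesis unfolding x_def .
qed

definition QQ' :: "real \<Rightarrow> real" where
  "QQ' u = 3/5 + 7/12 * u + 231/416 * u^2 + 1155/884 * u^3"

lemma QQ_deriv: "(QQ has_real_derivative QQ' u) (at u)"
  unfolding QQ_def[abs_def] QQ'_def
  by (rule derivative_eq_intros refl)+ (simp add: field_simps)

lemma QQ_key: "QQ u / 4 + u * QQ' u = PP u"
  unfolding QQ_def QQ'_def PP_def by algebra

definition AA :: "real \<Rightarrow> real" where "AA u = u powr (1/4) * QQ u"

lemma AA_deriv:
  assumes u: "0 < u"
  shows "(AA has_real_derivative u powr (-3/4) * PP u) (at u)"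
proof -
  have A: "(AA has_real_derivative ((1/4) * u powr (1/4 - 1) * QQ u + u powr (1/4) * QQ' u)) (at u)"
    unfolding AA_def[abs_def] using u
    by (auto intro!: derivative_eq_intros QQ_deriv)
  have e1: "u powr (1/4) = u powr (-3/4) * u"
  proof -
    have "u powr (1/4) = u powr (-3/4 + 1)" by simp
    also have "\<dots> = u powr (-3/4) * u powr 1" by (rule powr_add)
    also have "\<dots> = u powr (-3/4) * u" using u by simp
    finally show ?thesis .
  qed
  have "(1/4) * u powr (1/4 - 1) * QQ u + u powr (1/4) * QQ' u = u powr (-3/4) * (QQ u / 4 + u * QQ' u)"
    unfolding e1 by (simp add: algebra_simps)
  also have "\<dots> = u powr (-3/4) * PP u" by (simp add: QQ_key)
  finally show ?thesis using A by simp
qed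

lemma AA_cont: "continuous_on {0..1} AA"
  unfolding AA_def QQ_def by (intro continuous_intros continuous_on_powr') auto

lemma int_left: "((\<lambda>u. u powr (-3/4) * PP u) has_integral AA (1/2)) {0..1/2}"
proof -
  have "((\<lambda>u. u powr (-3/4) * PP u) has_integral AA (1/2) - AA 0) {0..1/2}"
  proof (rule fundamental_theorem_of_calculus_interior)
    show "continuous_on {0..1/2} AA" by (rule continuous_on_subset[OF AA_cont]) auto
    fix u :: real assume "u \<in> {0<..<1/2}"
    then have u: "0 < u" by simp
    show "(AA has_vector_derivative u powr (-3/4) * PP u) (at u)"
      using AA_deriv[OF u] by (simp add: has_real_derivative_iff_has_vector_derivative)
  qed simp
  then show ?thesis by (simp add: AA_def)
qed

lemma int_right: "((\<lambda>u. (1 - u) powr (-3/4) * PP (1 - u)) has_integral AA (1/2)) {1/2..1}"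
proof -
  have "((\<lambda>u. (1 - u) powr (-3/4) * PP (1 - u)) has_integral (- AA (1 - 1)) - (- AA (1 - 1/2))) {1/2..1}"
  proof (rule fundamental_theorem_of_calculus_interior)
    show "continuous_on {1/2..1} (\<lambda>u. - AA (1 - u))"
      by (intro continuous_intros continuous_on_compose2[OF AA_cont]) auto
    fix u :: real assume "u \<in> {1/2<..<1}"
    then have u: "0 < 1 - u" by simp
    have d1: "((\<lambda>u. 1 - u) has_real_derivative (0 - 1)) (at u)" by (intro derivative_intros)
    have "((\<lambda>u. - AA (1 - u)) has_real_derivative - ((1 - u) powr (-3/4) * PP (1 - u) * (0 - 1))) (at u)"
      by (intro DERIV_minus DERIV_chain2[where f=AA and g="\<lambda>u. 1 - u" and x=u, OF AA_deriv[OF u] d1])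
    then show "((\<lambda>u. - AA (1 - u)) has_vector_derivative (1 - u) powr (-3/4) * PP (1 - u)) (at u)"
      by (simp add: has_real_derivative_iff_has_vector_derivative)
  qed simp
  then show ?thesis by (simp add: AA_def)
qed

lemma AA_half: "AA (1/2) \<le> 3.71426"
proof -
  have h: "(1/2::real) powr (1/4) \<le> 841/1000"
  proof -
    have "(1/2::real) powr (1/4) \<le> ((841/1000) ^ 4) powr (1/4)"
      by (rule powr_mono2) (auto simp: power_divide)
    also have "((841/1000::real) ^ 4) powr (1/4) = 841/1000"
    proof -
      have e: "(841/1000::real) ^ 4 = (841/1000) powr (real 4)" by (rule powr_realpow[symmetric]) simp
      have "((841/1000::real) ^ 4) powr (1/4) = (841/1000) powr (real 4 * (1/4))" by (simp only: e powr_powr)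
      also have "\<dots> = 841/1000" by simp
      finally show ?thesis .
    qed
    finally show ?thesis .
  qed
  have q: "QQ (1/2) = 468499/106080" unfolding QQ_def by (simp add: power_divide)
  have "AA (1/2) \<le> 841/1000 * (468499/106080)"
    unfolding AA_def q by (rule mult_right_mono[OF h]) simp
  also have "\<dots> \<le> 3.71426" by simp
  finally show ?thesis .
qed

lemma int_beta_half: "((\<lambda>u. 1 / sqrt (u * (1 - u))) has_integral pi) {0..1}"
proof -
  have "((\<lambda>u. 1 / sqrt (u * (1 - u))) has_integral arcsin (2 * 1 - 1) - arcsin (2 * 0 - 1)) {0..1}"
  proof (rule fundamental_theorem_of_calculus_interior)
    show "continuous_on {0..1} (\<lambda>u. arcsin (2 * u - 1))"
      by (intro continuous_intros continuous_on_arcsin') auto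
    fix u :: real assume "u \<in> {0<..<1}"
    then have u: "0 < u" "u < 1" by auto
    have d1: "((\<lambda>u. 2 * u - 1) has_real_derivative (2 * 1 - 0)) (at u)"
      by (intro DERIV_diff DERIV_cmult DERIV_ident DERIV_const)
    have "((\<lambda>u. arcsin (2 * u - 1)) has_real_derivative inverse (sqrt (1 - (2 * u - 1)^2)) * (2 * 1 - 0)) (at u)"
      by (rule DERIV_chain2[where f=arcsin and g="\<lambda>u. 2 * u - 1" and x=u, OF DERIV_arcsin d1]) (use u in auto)
    moreover have "inverse (sqrt (1 - (2 * u - 1)^2)) * (2 * 1 - 0) = 1 / sqrt (u * (1 - u))"
    proof -
      have "1 - (2 * u - 1)^2 = 4 * (u * (1 - u))" by (simp add: power2_eq_square algebra_simps)
      then have "sqrt (1 - (2 * u - 1)^2) = 2 * sqrt (u * (1 - u))" by (simp add: real_sqrt_mult)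
      then show ?thesis using u by (simp add: field_simps)
    qed
    ultimately show "((\<lambda>u. arcsin (2 * u - 1)) has_vector_derivative 1 / sqrt (u * (1 - u))) (at u)"
      by (simp add: has_real_derivative_iff_has_vector_derivative)
  qed simp
  then show ?thesis by simp
qed

context qsl
begin

interpretation M: real_distribution M by (rule rd)

abbreviation ps :: "real \<Rightarrow> real" where "ps t \<equiv> cmod (char M t)"

lemma ps_le1: "ps t \<le> 1" by (rule M.cmod_char_le_1)
lemma ps_nn: "0 \<le> ps t" by simp
lemma ps0: "ps 0 = 1" by (simp add: M.char_zero)

lemma char_neg: "char M (- t) = cnj (char M t)"
proof -
  have e: "(\<lambda>x. iexp ((- t) * x)) = (\<lambda>x. cnj (iexp (t * x)))" by (rule ext) (simp only: cnj_iexp mult_minus_left)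
  show ?thesis unfolding char_def e by (rule Bochner_Integration.integral_cnj)
qed

lemma ps_sym: "ps (- t) = ps t"
  by (simp add: char_neg)

lemma ps_abs: "ps \<bar>t\<bar> = ps t"
  by (cases "t \<ge> 0") (simp_all add: ps_sym)

lemma ps_cont: "continuous_on S ps"
  by (intro continuous_on_norm continuous_at_imp_continuous_on ballI M.isCont_char)

lemma ps_int: "ps t \<le> integral {0..1} (\<lambda>u. ps (t * u) * ps (t * (1 - u)))"
  by (rule char_le1)

lemma ps_vdc: "t \<noteq> 0 \<Longrightarrow> ps t \<le> 2 / sqrt \<bar>t\<bar>"
  by (rule char_le2) (rule vdc_full)

definition Bd :: "real \<Rightarrow> real \<Rightarrow> bool" where
  "Bd p C \<longleftrightarrow> (\<forall>t. abs_pow t p * ps t \<le> C)"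

lemma Bd_imp:
  assumes "Bd p C"
  shows "bdd_above (range (\<lambda>t. abs_pow t p * ps t))" "qs_c M p \<le> C"
proof -
  show "bdd_above (range (\<lambda>t. abs_pow t p * ps t))"
    using assms unfolding Bd_def by (intro bdd_aboveI2) auto
  show "qs_c M p \<le> C"
    using assms unfolding Bd_def qs_c_def by (intro cSUP_least) auto
qed

lemma qs_c_ge:
  assumes "bdd_above (range (\<lambda>t. abs_pow t p * ps t))"
  shows "abs_pow t p * ps t \<le> qs_c M p"
  unfolding qs_c_def by (rule cSUP_upper[OF _ assms]) simp

lemma Bd_qs: "bdd_above (range (\<lambda>t. abs_pow t p * ps t)) \<Longrightarrow> Bd p (qs_c M p)"
  unfolding Bd_def using qs_c_ge by blast

lemma Bd_mono: "Bd p C \<Longrightarrow> C \<le> C' \<Longrightarrow> Bd p C'"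
  unfolding Bd_def by (meson order_trans)

lemma abs_pow_pos: "p \<noteq> 0 \<Longrightarrow> abs_pow t p = \<bar>t\<bar> powr p"
  by (simp add: abs_pow_def)

lemma Bd_ptw:
  assumes "Bd p C" "p > 0" "t \<noteq> 0"
  shows "ps t \<le> C * \<bar>t\<bar> powr (- p)"
proof -
  have "\<bar>t\<bar> powr p * ps t \<le> C" using assms unfolding Bd_def abs_pow_def by (metis less_irrefl)
  moreover have "\<bar>t\<bar> powr p > 0" using assms by simp
  ultimately have "ps t \<le> C / \<bar>t\<bar> powr p" by (simp add: field_simps)
  then show ?thesis by (simp add: powr_minus divide_inverse)
qed

lemma Bd_intro:
  assumes "p > 0" "0 \<le> C" "\<And>t. t \<noteq> 0 \<Longrightarrow> \<bar>t\<bar> powr p * ps t \<le> C"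
  shows "Bd p C"
  unfolding Bd_def
proof
  fix t
  show "abs_pow t p * ps t \<le> C"
  proof (cases "t = 0")
    case True then show ?thesis using assms by (simp add: abs_pow_def)
  next
    case False then show ?thesis using assms by (simp add: abs_pow_def)
  qed
qed

lemma Bd0: "Bd 0 1"
  unfolding Bd_def abs_pow_def using ps_le1 by simp

lemma Bd_half: "Bd (1/2) 2"
proof (rule Bd_intro)
  fix t :: real assume t: "t \<noteq> 0"
  have "\<bar>t\<bar> powr (1/2) * ps t = sqrt \<bar>t\<bar> * ps t" by (simp add: powr_half_sqrt)
  also have "\<dots> \<le> sqrt \<bar>t\<bar> * (2 / sqrt \<bar>t\<bar>)"
    by (rule mult_left_mono[OF ps_vdc[OF t]]) simp
  also have "\<dots> = 2" using t by simp
  finally show "\<bar>t\<bar> powr (1/2) * ps t \<le> 2" .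
qed auto

lemma int_le_open:
  fixes f g :: "real \<Rightarrow> real"
  assumes f: "f integrable_on {a..b}" and g: "(g has_integral I) {a..b}"
    and le: "\<And>u. u \<in> {a<..<b} \<Longrightarrow> f u \<le> g u"
  shows "integral {a..b} f \<le> I"
proof -
  have f': "(f has_integral integral {a..b} f) {a<..<b}"
    using f has_integral_Icc_iff_Ioo integrable_integral by blast
  have g': "(g has_integral I) {a<..<b}" using g has_integral_Icc_iff_Ioo by blast
  show ?thesis by (rule has_integral_le[OF f' g' le])
qed

lemma g_int: "(\<lambda>u. ps (t * u) * ps (t * (1 - u))) integrable_on {a..b}"
  by (rule integrable_continuous_interval)
    (intro continuous_intros continuous_on_compose2[OF ps_cont[of UNIV]]; auto)

lemma ps_int_le:
  assumes g: "(g has_integral I) {0..1}" and le: "\<And>u. u \<in> {0<..<1} \<Longrightarrow> ps (t * u) * ps (t * (1 - u)) \<le> g u"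
  shows "ps t \<le> I"
  using ps_int[of t] int_le_open[OF g_int g le] by linarith

lemma Bd_one: "Bd 1 (4 * pi)"
proof (rule Bd_intro)
  fix t :: real assume t: "t \<noteq> 0"
  have "ps t \<le> 4 / \<bar>t\<bar> * pi"
  proof (rule ps_int_le)
    show "((\<lambda>u. 4 / \<bar>t\<bar> * (1 / sqrt (u * (1 - u)))) has_integral 4 / \<bar>t\<bar> * pi) {0..1}"
      by (rule has_integral_mult_right[OF int_beta_half])
    fix u :: real assume u: "u \<in> {0<..<1}"
    have tu: "t * u \<noteq> 0" "t * (1 - u) \<noteq> 0" using t u by auto
    have "ps (t * u) * ps (t * (1 - u)) \<le> (2 / sqrt \<bar>t * u\<bar>) * (2 / sqrt \<bar>t * (1 - u)\<bar>)"
      by (rule mult_mono[OF ps_vdc[OF tu(1)] ps_vdc[OF tu(2)]]) auto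
    also have "\<dots> = 4 / \<bar>t\<bar> * (1 / sqrt (u * (1 - u)))"
    proof -
      have a: "\<bar>t * u\<bar> = \<bar>t\<bar> * u" "\<bar>t * (1 - u)\<bar> = \<bar>t\<bar> * (1 - u)" using u by (auto simp: abs_mult)
      have "sqrt \<bar>t * u\<bar> * sqrt \<bar>t * (1 - u)\<bar> = sqrt ((\<bar>t\<bar> * u) * (\<bar>t\<bar> * (1 - u)))"
        unfolding a by (rule real_sqrt_mult[symmetric])
      also have "(\<bar>t\<bar> * u) * (\<bar>t\<bar> * (1 - u)) = \<bar>t\<bar>^2 * (u * (1 - u))" by (simp add: power2_eq_square)
      also have "sqrt (\<bar>t\<bar>^2 * (u * (1 - u))) = \<bar>t\<bar> * sqrt (u * (1 - u))" by (simp add: real_sqrt_mult)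
      finally have "sqrt \<bar>t * u\<bar> * sqrt \<bar>t * (1 - u)\<bar> = \<bar>t\<bar> * sqrt (u * (1 - u))" .
      then show ?thesis using u t by (simp add: field_simps)
    qed
    finally show "ps (t * u) * ps (t * (1 - u)) \<le> 4 / \<bar>t\<bar> * (1 / sqrt (u * (1 - u)))" .
  qed
  then have "\<bar>t\<bar> * ps t \<le> 4 * pi" using t by (simp add: field_simps)
  then show "\<bar>t\<bar> powr 1 * ps t \<le> 4 * pi" by simp
qed auto

lemma Bd_34: "Bd (3/4) (sqrt (8 * pi))"
proof (rule Bd_intro)
  fix t :: real assume t: "t \<noteq> 0"
  have h: "\<bar>t\<bar> powr (1/2) * ps t \<le> 2" using Bd_half unfolding Bd_def abs_pow_def by (metis zero_neq_numeral divide_eq_0_iff one_neq_zero)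
  have o: "\<bar>t\<bar> powr 1 * ps t \<le> 4 * pi" using Bd_one unfolding Bd_def abs_pow_def by (metis one_neq_zero)
  define x where "x = \<bar>t\<bar> powr (3/4) * ps t"
  have x0: "0 \<le> x" unfolding x_def by simp
  have "x^2 = (\<bar>t\<bar> powr (1/2) * ps t) * (\<bar>t\<bar> powr 1 * ps t)"
  proof -
    have "(\<bar>t\<bar> powr (3/4))^2 = \<bar>t\<bar> powr (3/4) * \<bar>t\<bar> powr (3/4)" by (simp add: power2_eq_square)
    also have "\<dots> = \<bar>t\<bar> powr (3/4 + 3/4)" by (rule powr_add[symmetric])
    also have "\<dots> = \<bar>t\<bar> powr (1/2 + 1)" by simp
    also have "\<dots> = \<bar>t\<bar> powr (1/2) * \<bar>t\<bar> powr 1" by (rule powr_add)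
    finally have "(\<bar>t\<bar> powr (3/4))^2 = \<bar>t\<bar> powr (1/2) * \<bar>t\<bar> powr 1" .
    then show ?thesis unfolding x_def by (simp add: power2_eq_square algebra_simps)
  qed
  also have "\<dots> \<le> 2 * (4 * pi)"
    by (rule mult_mono[OF h o]) auto
  finally have "x^2 \<le> 8 * pi" by simp
  then show "\<bar>t\<bar> powr (3/4) * ps t \<le> sqrt (8 * pi)"
    unfolding x_def[symmetric] using x0 by (simp add: real_le_rsqrt)
qed auto

lemma g_split: "integral {0..1} (\<lambda>u. ps (t * u) * ps (t * (1 - u))) =
   integral {0..1/2} (\<lambda>u. ps (t * u) * ps (t * (1 - u))) + integral {1/2..1} (\<lambda>u. ps (t * u) * ps (t * (1 - u)))"
  using Henstock_Kurzweil_Integration.integral_combine[where f="\<lambda>u. ps (t * u) * ps (t * (1 - u))" and a=0 and c="1/2" and b=1] g_int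
  by simp

lemma Bd_32: "Bd (3/2) 186.7"
proof (rule Bd_intro)
  fix t :: real assume t: "t \<noteq> 0"
  define K where "K = sqrt (8 * pi)"
  have K2: "K * K = 8 * pi" unfolding K_def by simp
  have K0: "K \<ge> 0" unfolding K_def by simp
  have pt: "ps s \<le> K * \<bar>s\<bar> powr (-3/4)" if "s \<noteq> 0" for s
    using Bd_ptw[OF Bd_34 _ that] unfolding K_def by simp
  define c where "c = K * K * \<bar>t\<bar> powr (-3/2)"
  have c0: "c \<ge> 0" unfolding c_def using K0 by simp
  have tp: "\<bar>t\<bar> powr (-3/4) * \<bar>t\<bar> powr (-3/4) = \<bar>t\<bar> powr (-3/2)"
    by (simp add: powr_add[symmetric])
  have pw: "ps (t * v) \<le> K * \<bar>t\<bar> powr (-3/4) * v powr (-3/4)" if "0 < v" for v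
  proof -
    have "ps (t * v) \<le> K * \<bar>t * v\<bar> powr (-3/4)" using pt t that by simp
    also have "\<bar>t * v\<bar> powr (-3/4) = \<bar>t\<bar> powr (-3/4) * v powr (-3/4)"
      using that by (simp add: abs_mult powr_mult)
    finally show ?thesis by (simp add: mult.assoc)
  qed
  have L: "integral {0..1/2} (\<lambda>u. ps (t * u) * ps (t * (1 - u))) \<le> c * AA (1/2)"
  proof (rule int_le_open[OF g_int])
    show "((\<lambda>u. c * (u powr (-3/4) * PP u)) has_integral c * AA (1/2)) {0..1/2}"
      by (rule has_integral_mult_right[OF int_left])
    fix u :: real assume u: "u \<in> {0<..<1/2}"
    have a: "ps (t * u) \<le> K * \<bar>t\<bar> powr (-3/4) * u powr (-3/4)" using pw u by simp
    have "ps (t * (1 - u)) \<le> K * \<bar>t\<bar> powr (-3/4) * (1 - u) powr (-3/4)" using pw u by simp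
    also have "\<dots> \<le> K * \<bar>t\<bar> powr (-3/4) * PP u"
      by (rule mult_left_mono[OF PP_bound]) (use u K0 in auto)
    finally have b: "ps (t * (1 - u)) \<le> K * \<bar>t\<bar> powr (-3/4) * PP u" .
    have "ps (t * u) * ps (t * (1 - u)) \<le> (K * \<bar>t\<bar> powr (-3/4) * u powr (-3/4)) * (K * \<bar>t\<bar> powr (-3/4) * PP u)"
      by (rule mult_mono[OF a b]) (use K0 in auto)
    also have "\<dots> = c * (u powr (-3/4) * PP u)"
      unfolding c_def tp[symmetric] by (simp add: algebra_simps)
    finally show "ps (t * u) * ps (t * (1 - u)) \<le> c * (u powr (-3/4) * PP u)" .
  qed
  have R: "integral {1/2..1} (\<lambda>u. ps (t * u) * ps (t * (1 - u))) \<le> c * AA (1/2)"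
  proof (rule int_le_open[OF g_int])
    show "((\<lambda>u. c * ((1 - u) powr (-3/4) * PP (1 - u))) has_integral c * AA (1/2)) {1/2..1}"
      by (rule has_integral_mult_right[OF int_right])
    fix u :: real assume u: "u \<in> {1/2<..<1}"
    have a: "ps (t * (1 - u)) \<le> K * \<bar>t\<bar> powr (-3/4) * (1 - u) powr (-3/4)" using pw u by simp
    have "ps (t * u) \<le> K * \<bar>t\<bar> powr (-3/4) * (1 - (1 - u)) powr (-3/4)" using pw u by simp
    also have "\<dots> \<le> K * \<bar>t\<bar> powr (-3/4) * PP (1 - u)"
      by (rule mult_left_mono[OF PP_bound]) (use u K0 in auto)
    finally have b: "ps (t * u) \<le> K * \<bar>t\<bar> powr (-3/4) * PP (1 - u)" .
    have "ps (t * u) * ps (t * (1 - u)) \<le> (K * \<bar>t\<bar> powr (-3/4) * PP (1 - u)) * (K * \<bar>t\<bar> powr (-3/4) * (1 - u) powr (-3/4))"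
      by (rule mult_mono[OF b a]) (use K0 PP_pos[of "1 - u"] u in auto)
    also have "\<dots> = c * ((1 - u) powr (-3/4) * PP (1 - u))"
      unfolding c_def tp[symmetric] by (simp add: algebra_simps)
    finally show "ps (t * u) * ps (t * (1 - u)) \<le> c * ((1 - u) powr (-3/4) * PP (1 - u))" .
  qed
  have "ps t \<le> c * AA (1/2) + c * AA (1/2)"
    using ps_int[of t] L R g_split[of t] by linarith
  then have "\<bar>t\<bar> powr (3/2) * ps t \<le> \<bar>t\<bar> powr (3/2) * (2 * c * AA (1/2))"
    by (intro mult_left_mono) auto
  also have "\<bar>t\<bar> powr (3/2) * (2 * c * AA (1/2)) = 2 * (K * K) * AA (1/2)"
  proof -
    have "\<bar>t\<bar> powr (3/2) * \<bar>t\<bar> powr (-3/2) = 1" using t by (simp add: powr_add[symmetric])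
    then show ?thesis unfolding c_def by (simp add: algebra_simps)
  qed
  also have "\<dots> \<le> 16 * 3.1415926535899 * 3.71426"
  proof -
    have "AA (1/2) \<ge> 0" unfolding AA_def QQ_def by simp
    then have "2 * (K * K) * AA (1/2) \<le> 16 * 3.1415926535899 * AA (1/2)"
      unfolding K2 using pi_approx(2) by (intro mult_right_mono) auto
    also have "\<dots> \<le> 16 * 3.1415926535899 * 3.71426"
      using AA_half by (intro mult_left_mono) auto
    finally show ?thesis .
  qed
  also have "\<dots> \<le> 186.7" by simp
  finally show "\<bar>t\<bar> powr (3/2) * ps t \<le> 186.7" .
qed auto

lemma int_refl: "integral {1/2..1} (\<lambda>u. f (1 - u)) = integral {0..1/2::real} (f :: real \<Rightarrow> real)"
proof -
  have "integral {1/2..1} (\<lambda>u. f (1 - u)) = integral {- (- 1/2) .. - (- 1)} (\<lambda>x. (\<lambda>v. f (1 + v)) (- x))"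
    by simp
  also have "\<dots> = integral {-1 .. -1/2} (\<lambda>v. f (1 + v))"
    using Henstock_Kurzweil_Integration.integral_reflect_real[where a="-1" and b="-1/2" and f="\<lambda>v. f (1 + v)"] by simp
  also have "\<dots> = integral {-1 .. -1/2} (f \<circ> (+) 1)" by (simp add: o_def)
  also have "\<dots> = integral {-1 + 1 .. -1/2 + 1} f" by (rule integral_shift_Icc_real)
  finally show ?thesis by simp
qed

lemma int_scale:
  assumes t: "t \<noteq> 0"
  shows "integral {0..1/2} (\<lambda>u. ps (t * u)) = integral {0..\<bar>t\<bar>/2} ps / \<bar>t\<bar>"
proof -
  have "integral {0..1/2} (\<lambda>u. ps (t * u)) = integral {0..1/2} (\<lambda>u. ps (\<bar>t\<bar> * u))"
  proof (rule integral_cong)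
    fix u :: real assume "u \<in> {0..1/2}"
    then have "\<bar>t * u\<bar> = \<bar>t\<bar> * u" by (simp add: abs_mult)
    then show "ps (t * u) = ps (\<bar>t\<bar> * u)" using ps_abs[of "t * u"] by simp
  qed
  also have "\<dots> = integral ((\<lambda>x. x / \<bar>t\<bar>) ` {0..\<bar>t\<bar>/2}) (\<lambda>u. ps (\<bar>t\<bar> * u))"
    using t by simp
  also have "\<dots> = (1 / \<bar>\<bar>t\<bar>\<bar>) *\<^sub>R integral {0..\<bar>t\<bar>/2} ps"
    by (rule integral_stretch_real) (use t in simp)
  finally show ?thesis by simp
qed

lemma ps_scaled_int: "(\<lambda>u. ps (t * u)) integrable_on {a..b}"
  by (rule integrable_continuous_interval)
    (intro continuous_on_compose2[OF ps_cont[of UNIV]] continuous_intros; auto)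

lemma Bd_rec:
  assumes B: "Bd q C" and q: "q > 0" and C: "C \<ge> 0" and K: "K \<ge> 0"
    and I: "\<And>T. T \<ge> 0 \<Longrightarrow> integral {0..T} ps \<le> K"
  shows "Bd (q + 1) (2 powr (q + 1) * C * K)"
proof (rule Bd_intro)
  fix t :: real assume t: "t \<noteq> 0"
  define T where "T = \<bar>t\<bar>"
  have T: "T > 0" using t by (simp add: T_def)
  define B where "B = C * (T/2) powr (- q)"
  have B0: "B \<ge> 0" using C by (simp add: B_def)
  have pb: "ps (t * v) \<le> B" if v: "1/2 \<le> v" "v \<le> 1" for v
  proof -
    have tv: "t * v \<noteq> 0" using t v by auto
    have "ps (t * v) \<le> C * \<bar>t * v\<bar> powr (- q)" by (rule Bd_ptw[OF B q tv])
    also have "\<dots> \<le> C * (T/2) powr (- q)"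
    proof (rule mult_left_mono[OF _ C])
      have "T/2 \<le> \<bar>t * v\<bar>" using v T by (simp add: abs_mult T_def)
      then show "\<bar>t * v\<bar> powr (- q) \<le> (T/2) powr (- q)"
        by (intro powr_mono2') (use q T in auto)
    qed
    finally show ?thesis unfolding B_def .
  qed
  have half: "integral {0..1/2} (\<lambda>u. ps (t * u)) \<le> K / T"
  proof -
    have "integral {0..T/2} ps \<le> K" using I T by simp
    then show ?thesis unfolding int_scale[OF t] T_def[symmetric] using T by (simp add: divide_right_mono)
  qed
  have L: "integral {0..1/2} (\<lambda>u. ps (t * u) * ps (t * (1 - u))) \<le> B * integral {0..1/2} (\<lambda>u. ps (t * u))"
  proof (rule int_le_open[OF g_int])
    show "((\<lambda>u. B * ps (t * u)) has_integral B * integral {0..1/2} (\<lambda>u. ps (t * u))) {0..1/2}"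
      by (intro has_integral_mult_right integrable_integral ps_scaled_int)
    fix u :: real assume u: "u \<in> {0<..<1/2}"
    have "ps (t * (1 - u)) \<le> B" using pb u by simp
    then show "ps (t * u) * ps (t * (1 - u)) \<le> B * ps (t * u)"
      using mult_right_mono[OF _ ps_nn[of "t * u"], of "ps (t * (1 - u))" B] by (simp add: mult.commute)
  qed
  have R: "integral {1/2..1} (\<lambda>u. ps (t * u) * ps (t * (1 - u))) \<le> B * integral {0..1/2} (\<lambda>u. ps (t * u))"
  proof (rule int_le_open[OF g_int])
    have "((\<lambda>u. ps (t * (1 - u))) has_integral integral {0..1/2} (\<lambda>u. ps (t * u))) {1/2..1}"
    proof -
      have "(\<lambda>u. ps (t * (1 - u))) integrable_on {1/2..1}"
        by (rule integrable_continuous_interval)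
          (intro continuous_on_compose2[OF ps_cont[of UNIV]] continuous_intros; auto)
      then show ?thesis using int_refl[of "\<lambda>u. ps (t * u)"] by (simp add: has_integral_integrable_integral)
    qed
    then show "((\<lambda>u. B * ps (t * (1 - u))) has_integral B * integral {0..1/2} (\<lambda>u. ps (t * u))) {1/2..1}"
      by (rule has_integral_mult_right)
    fix u :: real assume u: "u \<in> {1/2<..<1}"
    have "ps (t * u) \<le> B" using pb u by simp
    then show "ps (t * u) * ps (t * (1 - u)) \<le> B * ps (t * (1 - u))"
      by (simp add: mult_right_mono)
  qed
  have "ps t \<le> 2 * B * (K / T)"
  proof -
    have "ps t \<le> 2 * B * integral {0..1/2} (\<lambda>u. ps (t * u))"
      using ps_int[of t] L R g_split[of t] by linarith
    also have "\<dots> \<le> 2 * B * (K / T)" using half B0 by (intro mult_left_mono) auto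
    finally show ?thesis .
  qed
  then have "T powr (q + 1) * ps t \<le> T powr (q + 1) * (2 * B * (K / T))"
    by (intro mult_left_mono) auto
  also have "T powr (q + 1) * (2 * B * (K / T)) = 2 powr (q + 1) * C * K"
  proof -
    have a: "T powr (q + 1) = T powr q * T" using T by (simp add: powr_add)
    have b: "(T/2) powr (- q) = T powr (- q) * 2 powr q"
    proof -
      have "(T/2) powr (- q) = T powr (- q) / 2 powr (- q)" by (rule powr_divide)
      also have "2 powr (- q) = inverse (2 powr q)" by (rule powr_minus)
      also have "T powr (- q) / inverse (2 powr q) = T powr (- q) * 2 powr q" by (simp add: divide_inverse)
      finally show ?thesis .
    qed
    have c: "T powr q * T powr (- q) = 1"
    proof -
      have "T powr q * T powr (- q) = T powr (q + - q)" by (rule powr_add[symmetric])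
      then show ?thesis using T by simp
    qed
    have d: "2 powr (q + 1) = 2 * 2 powr q" by (simp add: powr_add)
    show ?thesis unfolding a B_def b d using T c by (simp add: field_simps)
  qed
  finally show "\<bar>t\<bar> powr (q + 1) * ps t \<le> 2 powr (q + 1) * C * K" unfolding T_def .
qed (use q C K in auto)

lemma ps_int_on: "ps integrable_on {a..b}"
  by (rule integrable_continuous_interval[OF ps_cont])

lemma ps_int_mono:
  assumes "0 \<le> T" "T \<le> T'"
  shows "integral {0..T} ps \<le> integral {0..T'} ps"
proof -
  have "integral {0..T} ps + integral {T..T'} ps = integral {0..T'} ps"
    using Henstock_Kurzweil_Integration.integral_combine[where f=ps and a=0 and c=T and b=T'] assms ps_int_on by simp
  moreover have "integral {T..T'} ps \<ge> 0" by (rule integral_nonneg[OF ps_int_on]) simp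
  ultimately show ?thesis by linarith
qed

lemma ps_int_split:
  assumes "a \<le> b" "b \<le> c"
  shows "integral {a..c} ps = integral {a..b} ps + integral {b..c} ps"
  using Henstock_Kurzweil_Integration.integral_combine[where f=ps and a=a and c=b and b=c] assms ps_int_on by simp

lemma powr_int:
  fixes a b r :: real
  assumes a0: "0 < a" and ab: "a \<le> b" and r: "r \<noteq> 1"
  shows "((\<lambda>s. s powr (- r)) has_integral (b powr (1 - r) / (1 - r) - a powr (1 - r) / (1 - r))) {a..b}"
proof -
  define F where "F s = s powr (1 - r) / (1 - r)" for s :: real
  have "((\<lambda>s. s powr (- r)) has_integral (F b - F a)) {a..b}"
  proof (rule fundamental_theorem_of_calculus)
    show "a \<le> b" by (rule ab)
    fix s assume s: "s \<in> {a..b}"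
    then have s0: "0 < s" using a0 by auto
    have "(F has_real_derivative ((1 - r) * s powr (1 - r - 1) / (1 - r))) (at s within {a..b})"
      unfolding F_def[abs_def] using s0 by (auto intro!: derivative_eq_intros)
    moreover have "(1 - r) * s powr (1 - r - 1) / (1 - r) = s powr (- r)" using r by simp
    ultimately show "(F has_vector_derivative s powr (- r)) (at s within {a..b})"
      by (simp add: has_real_derivative_iff_has_vector_derivative)
  qed
  then show ?thesis unfolding F_def .
qed

lemma ps_int_powr:
  assumes B: "Bd p C" and p: "p > 0" "p \<noteq> 1" and a: "0 < a" "a \<le> b"
  shows "integral {a..b} ps \<le> C * (b powr (1 - p) / (1 - p) - a powr (1 - p) / (1 - p))"
proof (rule int_le_open[OF ps_int_on])
  show "((\<lambda>s. C * s powr (- p)) has_integral C * (b powr (1 - p) / (1 - p) - a powr (1 - p) / (1 - p))) {a..b}"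
    by (rule has_integral_mult_right[OF powr_int[OF a p(2)]])
  fix s assume "s \<in> {a<..<b}"
  then have s: "s > 0" "s \<noteq> 0" using a by auto
  show "ps s \<le> C * s powr (- p)" using Bd_ptw[OF B p(1) s(2)] s by simp
qed

lemma ps_int_one: "0 \<le> a \<Longrightarrow> a \<le> b \<Longrightarrow> integral {a..b} ps \<le> b - a"
proof -
  assume ab: "0 \<le> a" "a \<le> b"
  have "integral {a..b} ps \<le> integral {a..b} (\<lambda>_. 1::real)"
    by (rule integral_le[OF ps_int_on]) (auto simp: ps_le1)
  then show ?thesis using ab by simp
qed

lemma Kint1: "T \<ge> 0 \<Longrightarrow> integral {0..T} ps \<le> 74"
proof -
  assume T: "T \<ge> 0"
  define T' where "T' = max T 100"
  have T': "100 \<le> T'" "T \<le> T'" unfolding T'_def by auto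
  have "integral {0..T} ps \<le> integral {0..T'} ps" by (rule ps_int_mono[OF T T'(2)])
  also have "integral {0..T'} ps = integral {0..4} ps + (integral {4..100} ps + integral {100..T'} ps)"
    using ps_int_split[of 0 4 T'] ps_int_split[of 4 100 T'] T' by simp
  also have "\<dots> \<le> 4 + (32 + 37.34)"
  proof -
    have i1: "integral {0..4} ps \<le> 4" using ps_int_one[of 0 4] by simp
    have i2: "integral {4..100} ps \<le> 2 * (100 powr (1 - 1/2) / (1 - 1/2) - 4 powr (1 - 1/2) / (1 - 1/2))"
      by (rule ps_int_powr[OF Bd_half]) auto
    have s10: "sqrt (100::real) = 10" "sqrt (4::real) = 2"
      using real_sqrt_abs[of "10::real"] real_sqrt_abs[of "2::real"] by (simp_all add: power2_eq_square)
    have e1: "100 powr (1 - 1/2) = (10::real)" "4 powr (1 - 1/2) = (2::real)"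
      using powr_half_sqrt[of "100::real"] powr_half_sqrt[of "4::real"] s10 by simp_all
    have i3: "integral {100..T'} ps \<le> 186.7 * (T' powr (1 - 3/2) / (1 - 3/2) - 100 powr (1 - 3/2) / (1 - 3/2))"
      by (rule ps_int_powr[OF Bd_32]) (use T' in auto)
    have e2: "100 powr (1 - 3/2) = (1/10::real)"
    proof -
      have "100 powr (1 - 3/2) = 100 powr (- (1/2::real))" by simp
      also have "\<dots> = inverse (100 powr (1/2::real))" by (rule powr_minus)
      also have "100 powr (1/2::real) = 10" using powr_half_sqrt[of "100::real"] s10 by simp
      finally show ?thesis by simp
    qed
    have x0: "T' powr (- (1/2)) \<ge> 0" by simp
    have i3': "integral {100..T'} ps \<le> 37.34" using i3 x0 unfolding e2 by (simp; linarith)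
    show ?thesis using i1 i2 i3' unfolding e1 by simp
  qed
  finally show ?thesis by simp
qed

lemma Kint2:
  assumes B: "Bd p C" and p: "p > 1" and C: "C > 0" and T: "T \<ge> 0"
  shows "integral {0..T} ps \<le> C powr (1/p) * p / (p - 1)"
proof -
  define s0 where "s0 = C powr (1/p)"
  have s0: "s0 > 0" using C by (simp add: s0_def)
  define T' where "T' = max T s0"
  have T': "s0 \<le> T'" "T \<le> T'" unfolding T'_def by auto
  have "integral {0..T} ps \<le> integral {0..T'} ps" by (rule ps_int_mono[OF T T'(2)])
  also have "\<dots> = integral {0..s0} ps + integral {s0..T'} ps"
    using ps_int_split[of 0 s0 T'] s0 T' by simp
  also have "\<dots> \<le> s0 + C * (T' powr (1 - p) / (1 - p) - s0 powr (1 - p) / (1 - p))"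
    using ps_int_one[of 0 s0] ps_int_powr[OF B _ _ s0 T'(1)] s0 p by simp
  also have "\<dots> \<le> s0 + C * s0 powr (1 - p) / (p - 1)"
  proof -
    have "T' powr (1 - p) / (1 - p) \<le> 0" using p by (simp add: divide_nonneg_neg)
    then have "C * (T' powr (1 - p) / (1 - p) - s0 powr (1 - p) / (1 - p)) \<le> C * (- (s0 powr (1 - p)) / (1 - p))"
      using C by (intro mult_left_mono) auto
    also have "\<dots> = C * s0 powr (1 - p) / (p - 1)" using p by (simp add: field_simps)
    finally show ?thesis by simp
  qed
  also have "C * s0 powr (1 - p) = s0"
  proof -
    have "s0 powr (1 - p) = C powr ((1/p) * (1 - p))" unfolding s0_def by (rule powr_powr)
    then have "C * s0 powr (1 - p) = C powr 1 * C powr ((1/p) * (1 - p))" using C by simp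
    also have "\<dots> = C powr (1 + (1/p) * (1 - p))" by (rule powr_add[symmetric])
    also have "1 + (1/p) * (1 - p) = 1/p" using p by (simp add: field_simps)
    finally show ?thesis unfolding s0_def .
  qed
  also have "s0 + s0 / (p - 1) = s0 * p / (p - 1)" using p by (simp add: field_simps)
  finally show ?thesis unfolding s0_def .
qed

lemma Bd_interp:
  assumes B: "Bd p2 C2" and C2: "C2 \<ge> 0" and p: "0 < p1" "p1 \<le> p2"
  shows "Bd p1 (C2 powr (p1 / p2))"
proof (rule Bd_intro)
  fix t :: real assume t: "t \<noteq> 0"
  have p2: "p2 > 0" using p by simp
  define x where "x = \<bar>t\<bar> powr p2 * ps t"
  have x: "0 \<le> x" "x \<le> C2"
    using B p2 unfolding x_def Bd_def abs_pow_def by (auto simp: less_imp_neq[OF p2, symmetric] dest: spec[of _ t])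
  show "\<bar>t\<bar> powr p1 * ps t \<le> C2 powr (p1 / p2)"
  proof (cases "ps t = 0")
    case True then show ?thesis by simp
  next
    case False
    then have ps0: "ps t > 0" by simp
    have "x powr (p1 / p2) = (\<bar>t\<bar> powr p2) powr (p1 / p2) * ps t powr (p1 / p2)"
      unfolding x_def by (rule powr_mult)
    also have "(\<bar>t\<bar> powr p2) powr (p1 / p2) = \<bar>t\<bar> powr p1"
      using p2 by (simp add: powr_powr)
    finally have ex: "x powr (p1 / p2) = \<bar>t\<bar> powr p1 * ps t powr (p1 / p2)" .
    have "ps t = ps t powr (p1 / p2 + (1 - p1 / p2))" using ps0 by simp
    also have "\<dots> = ps t powr (p1 / p2) * ps t powr (1 - p1 / p2)" by (rule powr_add)
    finally have eps: "ps t = ps t powr (p1 / p2) * ps t powr (1 - p1 / p2)" .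
    have "\<bar>t\<bar> powr p1 * ps t = x powr (p1 / p2) * ps t powr (1 - p1 / p2)"
      by (subst eps) (simp add: ex mult.assoc)
    also have "\<dots> \<le> C2 powr (p1 / p2) * 1"
    proof (rule mult_mono)
      show "x powr (p1 / p2) \<le> C2 powr (p1 / p2)" by (rule powr_mono2) (use x p p2 in auto)
      show "ps t powr (1 - p1 / p2) \<le> 1" by (rule powr_le1) (use p p2 ps_le1[of t] in \<open>auto simp: field_simps\<close>)
    qed auto
    finally show ?thesis by simp
  qed
qed (use p in auto)

lemma sqrt2_le: "sqrt 2 \<le> (1.4143::real)"
proof -
  have "sqrt 2 \<le> sqrt ((1.4143::real)^2)" by (rule real_sqrt_le_mono) (simp add: power2_eq_square)
  then show ?thesis by simp
qed

lemma two_powr_52: "2 powr (5/2) \<le> (4 * 1.4143 :: real)"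
proof -
  have "(2::real) powr (5/2) = 2 powr (2 + 1/2)" by simp
  also have "\<dots> = 2 powr 2 * 2 powr (1/2)" by (rule powr_add)
  also have "\<dots> = 4 * sqrt 2" by (simp add: powr_half_sqrt)
  finally show ?thesis using sqrt2_le by simp
qed

lemma two_powr_72: "2 powr (7/2) \<le> (8 * 1.4143 :: real)"
proof -
  have "(2::real) powr (7/2) = 2 powr (3 + 1/2)" by simp
  also have "\<dots> = 2 powr 3 * 2 powr (1/2)" by (rule powr_add)
  also have "\<dots> = 8 * sqrt 2" by (simp add: powr_half_sqrt)
  finally show ?thesis using sqrt2_le by simp
qed

lemma Bd_52: "Bd (5/2) 78200"
proof -
  have "Bd (3/2 + 1) (2 powr (3/2 + 1) * 186.7 * 74)"
    by (rule Bd_rec[OF Bd_32]) (use Kint1 in auto)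
  moreover have "2 powr (3/2 + 1) * 186.7 * 74 \<le> (78200::real)"
  proof -
    have "2 powr (3/2 + 1) * 186.7 * 74 \<le> (4 * 1.4143) * 186.7 * (74::real)"
      using two_powr_52 by (intro mult_right_mono) auto
    then show ?thesis by simp
  qed
  ultimately show ?thesis by (simp add: Bd_mono)
qed

lemma Bd_72: "Bd (7/2) 65500000"
proof -
  have "Bd (5/2 + 1) (2 powr (5/2 + 1) * 78200 * 74)"
    by (rule Bd_rec[OF Bd_52]) (use Kint1 in auto)
  moreover have "2 powr (5/2 + 1) * 78200 * 74 \<le> (65500000::real)"
  proof -
    have "2 powr (5/2 + 1) * 78200 * 74 \<le> (8 * 1.4143) * 78200 * (74::real)"
      using two_powr_72 by (intro mult_right_mono) auto
    then show ?thesis by simp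
  qed
  ultimately show ?thesis by (simp add: Bd_mono)
qed

lemma Bd_2: "Bd 2 8192"
proof -
  have "Bd (1 + 1) (2 powr (1 + 1) * (4 * pi) * 74)"
    by (rule Bd_rec[OF Bd_one]) (use Kint1 in auto)
  moreover have "2 powr (1 + 1) * (4 * pi) * 74 \<le> (8192::real)"
    using pi_approx(2) by simp
  ultimately show ?thesis by (simp add: Bd_mono)
qed

lemma two_powr_le: "a \<le> b \<Longrightarrow> (2::real) powr a \<le> 2 powr b"
  by simp

lemma Bd_small: "0 < p \<Longrightarrow> p \<le> 1/2 \<Longrightarrow> Bd p (2 powr (p^2 + 6*p))"
proof -
  assume p: "0 < p" "p \<le> 1/2"
  have "Bd p (2 powr (p / (1/2)))" by (rule Bd_interp[OF Bd_half]) (use p in auto)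
  moreover have "(2::real) powr (p / (1/2)) \<le> 2 powr (p^2 + 6*p)"
    using p by (intro two_powr_le) (simp add: power2_eq_square)
  ultimately show ?thesis by (rule Bd_mono)
qed

lemma Bd_mid: "1/2 < p \<Longrightarrow> p \<le> 2 \<Longrightarrow> Bd p (2 powr (p^2 + 6*p))"
proof -
  assume p: "1/2 < p" "p \<le> 2"
  have "Bd p (8192 powr (p / 2))" by (rule Bd_interp[OF Bd_2]) (use p in auto)
  moreover have "(8192::real) powr (p / 2) \<le> 2 powr (p^2 + 6*p)"
  proof -
    have e: "(8192::real) = 2 powr (real 13)" by (simp add: powr_realpow)
    have "(8192::real) powr (p / 2) = 2 powr (real 13 * (p / 2))" unfolding e by (rule powr_powr)
    then have "(8192::real) powr (p / 2) = 2 powr (13 * (p / 2))" by simp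
    also have "\<dots> \<le> 2 powr (p^2 + 6*p)"
    proof (rule two_powr_le)
      have "p / 2 \<le> p * p" using p by (simp add: field_simps)
      then show "13 * (p / 2) \<le> p^2 + 6*p" by (simp add: power2_eq_square)
    qed
    finally show ?thesis .
  qed
  ultimately show ?thesis by (rule Bd_mono)
qed

lemma Bd_big: "\<forall>p. 1/2 < p \<and> p \<le> real n + 2 \<longrightarrow> Bd p (2 powr (p^2 + 6*p))"
proof (induction n)
  case 0 then show ?case using Bd_mid by simp
next
  case (Suc n)
  show ?case
  proof (intro allI impI)
    fix p :: real assume p: "1/2 < p \<and> p \<le> real (Suc n) + 2"
    show "Bd p (2 powr (p^2 + 6*p))"
    proof (cases "p \<le> real n + 2")
      case True then show ?thesis using Suc.IH p by blast
    next
      case False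
      define q where "q = p - 1"
      have q: "1/2 < q" "q \<le> real n + 2" "q > 1" "p = q + 1" using p False by (auto simp: q_def)
      have Bq: "Bd q (2 powr (q^2 + 6*q))" using Suc.IH q by blast
      have "Bd (q + 1) (2 powr (q + 1) * 2 powr (q^2 + 6*q) * 74)"
        by (rule Bd_rec[OF Bq]) (use q Kint1 in auto)
      moreover have "2 powr (q + 1) * 2 powr (q^2 + 6*q) * 74 \<le> (2::real) powr ((q + 1)^2 + 6*(q + 1))"
      proof -
        have "2 powr (q + 1) * 2 powr (q^2 + 6*q) * 74 \<le> 2 powr (q + 1) * 2 powr (q^2 + 6*q) * (2 powr 7::real)"
        proof (rule mult_left_mono)
          have "(2::real) powr 7 = 2 powr (real 7)" by simp
          also have "\<dots> = 128" by (subst powr_realpow) auto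
          finally show "74 \<le> (2::real) powr 7" by simp
        qed simp
        also have "\<dots> = 2 powr (q + 1 + (q^2 + 6*q) + 7)" by (simp only: powr_add)
        also have "\<dots> \<le> 2 powr ((q + 1)^2 + 6*(q + 1))"
          by (rule two_powr_le) (use q in \<open>simp add: power2_eq_square algebra_simps\<close>)
        finally show ?thesis .
      qed
      ultimately show ?thesis unfolding q(4) by (rule Bd_mono)
    qed
  qed
qed

lemma Bd_all: "p > 0 \<Longrightarrow> Bd p (2 powr (p^2 + 6*p))"
proof -
  assume p: "p > 0"
  show ?thesis
  proof (cases "p \<le> 1/2")
    case True then show ?thesis using Bd_small p by simp
  next
    case False
    have "p \<le> real (nat \<lceil>p\<rceil>) + 2" by linarith
    then show ?thesis using Bd_big[of "nat \<lceil>p\<rceil>"] False by simp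
  qed
qed

lemma bdd_all: "p \<ge> 0 \<Longrightarrow> bdd_above (range (\<lambda>t. abs_pow t p * ps t))"
proof -
  assume p: "p \<ge> 0"
  show ?thesis
  proof (cases "p = 0")
    case True then show ?thesis using Bd_imp(1)[OF Bd0] by simp
  next
    case False then show ?thesis using Bd_imp(1)[OF Bd_all] p by simp
  qed
qed

lemma exists_pos: "\<exists>t. t \<noteq> 0 \<and> ps t > 0"
proof -
  have "isCont ps 0" by (intro continuous_intros M.isCont_char)
  then have "(ps \<longlongrightarrow> 1) (at 0)" using ps0 by (simp add: isCont_def)
  then have "eventually (\<lambda>t. 1/2 < ps t) (at 0)" by (rule order_tendstoD) simp
  then obtain d where d: "d > 0" "\<And>t. t \<noteq> 0 \<Longrightarrow> dist t 0 < d \<Longrightarrow> 1/2 < ps t"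
    unfolding eventually_at by auto
  have "d/2 \<noteq> 0" "1/2 < ps (d/2)" using d by auto
  then show ?thesis by (intro exI[of _ "d/2"]) auto
qed

lemma qs_pos: "p \<ge> 0 \<Longrightarrow> 0 < qs_c M p"
proof -
  assume p: "p \<ge> 0"
  obtain t where t: "t \<noteq> 0" "ps t > 0" using exists_pos by blast
  have "0 < abs_pow t p * ps t" using t by (simp add: abs_pow_def)
  also have "\<dots> \<le> qs_c M p" by (rule qs_c_ge[OF bdd_all[OF p]])
  finally show ?thesis .
qed

lemma main: "(\<forall>p\<ge>0. bdd_above (range (\<lambda>t. abs_pow t p * cmod (char M t))) \<and> 0 < qs_c M p)
    \<and> qs_c M 0 = 1
    \<and> qs_c M (1/2) \<le> 2
    \<and> qs_c M (3/4) \<le> sqrt (8 * pi)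
    \<and> qs_c M 1 \<le> 4 * pi
    \<and> qs_c M (3/2) < 187
    \<and> qs_c M (5/2) < 103215
    \<and> qs_c M (7/2) < 197102280
    \<and> (\<forall>p1 p2. 0 < p1 \<and> p1 \<le> p2 \<longrightarrow> qs_c M p1 powr (1/p1) \<le> qs_c M p2 powr (1/p2))
    \<and> (\<forall>p>1. qs_c M (p + 1) \<le> 2 powr (p + 1) * qs_c M p powr (1 + 1/p) * (p / (p - 1)))
    \<and> (\<forall>p>0. qs_c M p \<le> 2 powr (p^2 + 6*p))"
proof (intro conjI allI impI)
  fix p :: real assume "p \<ge> 0"
  then show "bdd_above (range (\<lambda>t. abs_pow t p * cmod (char M t)))" "0 < qs_c M p"
    using bdd_all qs_pos by auto
next
  show "qs_c M 0 = 1"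
  proof (rule antisym)
    show "qs_c M 0 \<le> 1" by (rule Bd_imp(2)[OF Bd0])
    have "abs_pow 0 0 * ps 0 \<le> qs_c M 0" by (rule qs_c_ge[OF bdd_all]) simp
    then show "1 \<le> qs_c M 0" by (simp add: abs_pow_def ps0)
  qed
next
  show "qs_c M (1/2) \<le> 2" by (rule Bd_imp(2)[OF Bd_half])
  show "qs_c M (3/4) \<le> sqrt (8 * pi)" by (rule Bd_imp(2)[OF Bd_34])
  show "qs_c M 1 \<le> 4 * pi" by (rule Bd_imp(2)[OF Bd_one])
  show "qs_c M (3/2) < 187" using Bd_imp(2)[OF Bd_32] by simp
  show "qs_c M (5/2) < 103215" using Bd_imp(2)[OF Bd_52] by simp
  show "qs_c M (7/2) < 197102280" using Bd_imp(2)[OF Bd_72] by simp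
next
  fix p1 p2 :: real assume p: "0 < p1 \<and> p1 \<le> p2"
  define C2 where "C2 = qs_c M p2"
  have C2: "C2 > 0" unfolding C2_def using qs_pos p by simp
  have "Bd p2 C2" unfolding C2_def by (rule Bd_qs[OF bdd_all]) (use p in simp)
  then have "Bd p1 (C2 powr (p1 / p2))" by (rule Bd_interp) (use C2 p in auto)
  then have le: "qs_c M p1 \<le> C2 powr (p1 / p2)" by (rule Bd_imp(2))
  have "qs_c M p1 powr (1/p1) \<le> (C2 powr (p1 / p2)) powr (1/p1)"
    by (rule powr_mono2[OF _ _ le]) (use p qs_pos[of p1] in auto)
  also have "\<dots> = C2 powr (1/p2)" using p by (simp add: powr_powr)
  finally show "qs_c M p1 powr (1/p1) \<le> qs_c M p2 powr (1/p2)" unfolding C2_def .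
next
  fix p :: real assume p: "p > 1"
  define c where "c = qs_c M p"
  have c: "c > 0" unfolding c_def using qs_pos p by simp
  have B: "Bd p c" unfolding c_def by (rule Bd_qs[OF bdd_all]) (use p in simp)
  have "Bd (p + 1) (2 powr (p + 1) * c * (c powr (1/p) * p / (p - 1)))"
    by (rule Bd_rec[OF B]) (use p c Kint2[OF B p c] in auto)
  then have "qs_c M (p + 1) \<le> 2 powr (p + 1) * c * (c powr (1/p) * p / (p - 1))" by (rule Bd_imp(2))
  also have "\<dots> = 2 powr (p + 1) * c powr (1 + 1/p) * (p / (p - 1))"
  proof -
    have "c * c powr (1/p) = c powr (1 + 1/p)" using c by (simp add: powr_add)
    then show ?thesis by (simp add: algebra_simps)
  qed
  finally show "qs_c M (p + 1) \<le> 2 powr (p + 1) * qs_c M p powr (1 + 1/p) * (p / (p - 1))" unfolding c_def .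
next
  fix p :: real assume "p > 0"
  then show "qs_c M p \<le> 2 powr (p^2 + 6*p)" using Bd_imp(2)[OF Bd_all] by simp
qed

end

theorem theorem2p1:
  fixes M :: "real measure"
  assumes "quicksort_limit_law M"
  shows "(\<forall>p\<ge>0. bdd_above (range (\<lambda>t. abs_pow t p * cmod (char M t))) \<and> 0 < qs_c M p)
    \<and> qs_c M 0 = 1
    \<and> qs_c M (1/2) \<le> 2
    \<and> qs_c M (3/4) \<le> sqrt (8 * pi)
    \<and> qs_c M 1 \<le> 4 * pi
    \<and> qs_c M (3/2) < 187
    \<and> qs_c M (5/2) < 103215
    \<and> qs_c M (7/2) < 197102280
    \<and> (\<forall>p1 p2. 0 < p1 \<and> p1 \<le> p2 \<longrightarrow> qs_c M p1 powr (1/p1) \<le> qs_c M p2 powr (1/p2))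
    \<and> (\<forall>p>1. qs_c M (p + 1) \<le> 2 powr (p + 1) * qs_c M p powr (1 + 1/p) * (p / (p - 1)))
    \<and> (\<forall>p>0. qs_c M p \<le> 2 powr (p^2 + 6*p))"
proof -
  interpret qsl M by (rule qsl.intro) (rule assms)
  show ?thesis by (rule main)
qed

end
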